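(* Let $d$ be a power of two, and let $\lambda,\mu>0$ satisfy $\mu>1$ and $\frac{2}{\lambda}\left(1+\frac{1}{1-e^{-\mu/\lambda}}\right)\le\varepsilon$. Then for any $\tau>0$, the algorithm PrivHeavyHitter with parameters $\lambda,\tau,\mu$ is $\varepsilon$-$\nabla_0$DP.
   Context: Input: $x^1,\dots,x^n\in\{0,1\}^d$, $d$ a power of two; each bit is an attribute. For $I=\{a,\dots,b\}$ let $I_{\mathrm{left}}=\{a,\dots,\lfloor\frac{a+b}2\rfloor\}$, $I_{\mathrm{right}}=\{\lfloor\frac{a+b}2\rfloor+1,\dots,b\}$; for $s\in\{0,1\}^{|I|}$, $f^I_s=|\{i:x^i|_I=s\}|$. For $\ell\in\{0,\dots,\log_2 d\}$, $\mathcal{I}_\ell$ is the collection of sets $\{2^\ell(t-1)+1,\dots,2^\ell t\}$, $t\in[d/2^\ell]$. For string sets, $S_1\circ S_2=\{s_1s_2:s_1\in S_1,s_2\in S_2\}$. $\mathrm{Lap}(\lambda)$ has density $\frac1{2\lambda}e^{-|z|/\lambda}$. PrivHeavyHitter: set $L_{\{j\}}=\{0,1\}$ for all $j\in[d]$. For $\ell=1,\dots,\log_2d$: let $\tau_\ell=\tau+(\ell-1)\mu$; for each $I\in\mathcal{I}_\ell$, set $L_I=\emptyset$ and for each $s\in L_{I_{\mathrm{left}}}\circ L_{I_{\mathrm{right}}}$ compute $\hat f^I_s=\max\{f^I_s,\tau_\ell-\mu\}+Z$ with fresh independent $Z\sim\mathrm{Lap}(\lambda)$, and add $s$ to $L_I$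 if $\hat f^I_s>\tau_\ell$. Output $L_{[d]}$. $M$ is $\varepsilon$-$\nabla_0$DP if for all datasets differing only in entry $i$ and all sets $E$, $\Pr[M(x)\in E]\le e^{\varepsilon\|x^i-x'^i\|_0}\Pr[M(x')\in E]$ ($\|\cdot\|_0$ Hamming distance). *)

theory Defs
  imports "HOL-Probability.Probability"
begin

definition laplace_density :: "real \<Rightarrow> real \<Rightarrow> real" where
  "laplace_density lam z = exp (- \<bar>z\<bar> / lam) / (2 * lam)"

definition laplace :: "real \<Rightarrow> real measure" where
  "laplace lam = density lborel (\<lambda>z. ennreal (laplace_density lam z))"

definition hamming :: "bool list \<Rightarrow> bool list \<Rightarrow> nat" where
  "hamming u v = card {j. j < length u \<and> u ! j \<noteq> v ! j}"

definition conc :: "bool list set \<Rightarrow> bool list set \<Rightarrow> bool list set" where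
  "conc S1 S2 = {s1 @ s2 | s1 s2. s1 \<in> S1 \<and> s2 \<in> S2}"

text \<open>f^I_s for I = {2^l(t-1)+1, ..., 2^l t} (1-indexed), i.e. the positions
  2^l(t-1), ..., 2^l t - 1 of the 0-indexed list; counts indices i with x^i|_I = s.\<close>
definition freq :: "bool list list \<Rightarrow> nat \<Rightarrow> nat \<Rightarrow> bool list \<Rightarrow> nat" where
  "freq x l t s = length (filter (\<lambda>v. take (2^l) (drop (2^l * (t - 1)) v) = s) x)"

text \<open>The lists L_I of PrivHeavyHitter, for I the t-th block of level l, given the
  noise values Z (l, t, s) used for candidate s of block t at level l.
  The left/right halves of block t at level l+1 are blocks 2t-1 and 2t of level l.
  At level l+1 the threshold is tau_{l+1} = tau + l * mu.\<close>
fun phh_L :: "real \<Rightarrow> real \<Rightarrow> bool list list \<Rightarrow> (nat \<times> nat \<times> bool list \<Rightarrow> real)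
              \<Rightarrow> nat \<Rightarrow> nat \<Rightarrow> bool list set" where
  "phh_L tau mu x Z 0 t = {[False], [True]}"
| "phh_L tau mu x Z (Suc l) t =
     {s \<in> conc (phh_L tau mu x Z l (2 * t - 1)) (phh_L tau mu x Z l (2 * t)).
        max (real (freq x (Suc l) t s)) (tau + real l * mu - mu) + Z (Suc l, t, s)
          > tau + real l * mu}"

text \<open>All (I, s) pairs that may ever receive noise when d = 2^k.\<close>
definition noise_idx :: "nat \<Rightarrow> (nat \<times> nat \<times> bool list) set" where
  "noise_idx k = {(l, t, s). 1 \<le> l \<and> l \<le> k \<and> 1 \<le> t \<and> t \<le> 2^k div 2^l \<and> length s = 2^l}"

text \<open>Output distribution of PrivHeavyHitter (parameters lam, tau, mu; d = 2^k) on dataset x: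
  one independent Lap(lam) variable per possible (I, s) pair; each is used at most once.\<close>
definition PrivHeavyHitter :: "real \<Rightarrow> real \<Rightarrow> real \<Rightarrow> nat \<Rightarrow> bool list list \<Rightarrow> bool list set measure" where
  "PrivHeavyHitter lam tau mu k x =
     distr (PiM (noise_idx k) (\<lambda>_. laplace lam)) (count_space UNIV)
           (\<lambda>Z. phh_L tau mu x Z k 1)"

definition nabla0_DP :: "real \<Rightarrow> nat \<Rightarrow> (bool list list \<Rightarrow> 'b measure) \<Rightarrow> bool" where
  "nabla0_DP eps d M \<longleftrightarrow>
     (\<forall>x x' i E. length x' = length x \<and> (\<forall>v\<in>set x. length v = d) \<and> (\<forall>v\<in>set x'. length v = d)
        \<and> i < length x \<and> (\<forall>j<length x. j \<noteq> i \<longrightarrow> x ! j = x' ! j)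
        \<longrightarrow> measure (M x) E \<le> exp (eps * real (hamming (x ! i) (x' ! i))) * measure (M x') E)"

end

theory Submission
  imports Defs "HOL-Real_Asymp.Real_Asymp"
begin

definition lapCDF :: "real \<Rightarrow> real \<Rightarrow> real" where
  "lapCDF lam y = (if y \<le> 0 then exp (y / lam) / 2 else 1 - exp (- y / lam) / 2)"

lemma lapCDF_deriv:
  assumes lam: "lam > 0"
  shows "(lapCDF lam has_real_derivative laplace_density lam x) (at x)"
proof -
  have dL: "((\<lambda>y. exp (y / lam) / 2) has_real_derivative exp (x / lam) / (2 * lam)) (at x)" for x
    using lam by (auto intro!: derivative_eq_intros simp: field_simps)
  have dR: "((\<lambda>y. 1 - exp (- y / lam) / 2) has_real_derivative exp (- x / lam) / (2 * lam)) (at x)" for x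
    using lam by (auto intro!: derivative_eq_intros simp: field_simps)
  consider "x < 0" | "x > 0" | "x = 0" by linarith
  then show ?thesis
  proof cases
    case 1
    have "((\<lambda>y. exp (y / lam) / 2) has_real_derivative laplace_density lam x) (at x)"
      using dL[of x] 1 by (simp add: laplace_density_def)
    then show ?thesis
      by (rule has_field_derivative_transform_within_open[where S="{..<0}"]) (use 1 in \<open>auto simp: lapCDF_def\<close>)
  next
    case 2
    have "((\<lambda>y. 1 - exp (- y / lam) / 2) has_real_derivative laplace_density lam x) (at x)"
      using dR[of x] 2 by (simp add: laplace_density_def)
    then show ?thesis
      by (rule has_field_derivative_transform_within_open[where S="{0<..}"]) (use 2 in \<open>auto simp: lapCDF_def\<close>)
  next
    case 3
    have l: "((\<lambda>y. (exp (y / lam) / 2 - exp (0 / lam) / 2) / (y - 0)) \<longlongrightarrow> 1 / (2 * lam)) (at_left 0)"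
      using dL[of 0] unfolding has_field_derivative_iff by (auto intro: tendsto_mono[OF at_le[OF subset_UNIV]])
    have r: "((\<lambda>y. ((1 - exp (- y / lam) / 2) - (1 - exp (- 0 / lam) / 2)) / (y - 0)) \<longlongrightarrow> 1 / (2 * lam)) (at_right 0)"
      using dR[of 0] unfolding has_field_derivative_iff by (auto intro: tendsto_mono[OF at_le[OF subset_UNIV]])
    have "((\<lambda>y. (lapCDF lam y - lapCDF lam 0) / (y - 0)) \<longlongrightarrow> 1 / (2 * lam)) (at 0)"
      unfolding filterlim_at_split
    proof
      show "((\<lambda>y. (lapCDF lam y - lapCDF lam 0) / (y - 0)) \<longlongrightarrow> 1 / (2 * lam)) (at_left 0)"
        using l by (rule Lim_transform_eventually)
          (auto simp: lapCDF_def eventually_at_left_field intro!: exI[of _ "-1"])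
      show "((\<lambda>y. (lapCDF lam y - lapCDF lam 0) / (y - 0)) \<longlongrightarrow> 1 / (2 * lam)) (at_right 0)"
        using r by (rule Lim_transform_eventually)
          (auto simp: lapCDF_def eventually_at_right_field intro!: exI[of _ 1])
    qed
    then show ?thesis using 3 unfolding has_field_derivative_iff by (simp add: laplace_density_def)
  qed
qed


lemma lapCDF_lim: "lam > 0 \<Longrightarrow> (lapCDF lam \<longlongrightarrow> 1) at_top"
proof -
  assume lam: "lam > 0"
  have "((\<lambda>y. 1 - exp (- y / lam) / 2) \<longlongrightarrow> 1) at_top"
    using lam by real_asymp
  then show ?thesis
    by (rule Lim_transform_eventually) (auto simp: lapCDF_def eventually_at_top_linorder intro!: exI[of _ 1])
qed

lemma lapCDF_lim_bot: "lam > 0 \<Longrightarrow> (\<lambda>n::nat. lapCDF lam (- real n)) \<longlonglongrightarrow> 0"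
proof -
  assume lam: "lam > 0"
  have "(\<lambda>n::nat. exp (- real n / lam) / 2) \<longlonglongrightarrow> 0"
    using lam by real_asymp
  then show ?thesis by (simp add: lapCDF_def)
qed

lemma lapCDF_bounds: "lam > 0 \<Longrightarrow> 0 \<le> lapCDF lam y \<and> lapCDF lam y \<le> 1"
proof -
  assume lam: "lam > 0"
  show ?thesis
  proof (cases "y \<le> 0")
    case True
    then have e: "exp (y / lam) \<le> 1" using lam by (simp add: divide_nonpos_pos)
    have "lapCDF lam y = exp (y / lam) / 2" using True by (simp add: lapCDF_def)
    with e show ?thesis using exp_gt_zero[of "y / lam"] by linarith
  next
    case False
    then have e: "exp (- y / lam) \<le> 1" using lam by (simp add: divide_nonpos_pos)
    have "lapCDF lam y = 1 - exp (- y / lam) / 2" using False by (simp add: lapCDF_def)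
    with e show ?thesis using exp_gt_zero[of "- y / lam"] by linarith
  qed
qed

lemma laplace_density_nonneg: "lam > 0 \<Longrightarrow> 0 \<le> laplace_density lam x"
  by (simp add: laplace_density_def)

lemma borel_laplace_density[measurable]: "laplace_density lam \<in> borel_measurable borel"
  unfolding laplace_density_def by measurable

lemma emeasure_laplace_atLeast:
  assumes lam: "lam > 0"
  shows "emeasure (laplace lam) {y..} = ennreal (1 - lapCDF lam y)"
proof -
  have "emeasure (laplace lam) {y..} = (\<integral>\<^sup>+x. ennreal (laplace_density lam x) * indicator {y..} x \<partial>lborel)"
    unfolding laplace_def by (subst emeasure_density) auto
  also have "\<dots> = ennreal (1 - lapCDF lam y)"
    by (rule nn_integral_FTC_atLeast[OF borel_laplace_density lapCDF_deriv[OF lam]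
          laplace_density_nonneg[OF lam] lapCDF_lim[OF lam]])
  finally show ?thesis .
qed

lemma emeasure_laplace_singleton:
  assumes lam: "lam > 0"
  shows "emeasure (laplace lam) {y} = 0"
  unfolding laplace_def by (subst emeasure_density) auto

lemma prob_space_laplace:
  assumes lam: "lam > 0"
  shows "prob_space (laplace lam)"
proof
  let ?A = "\<lambda>n::nat. {- real n..}"
  have "(SUP n. emeasure (laplace lam) (?A n)) = emeasure (laplace lam) (\<Union>n. ?A n)"
    by (rule SUP_emeasure_incseq) (auto simp: laplace_def incseq_def)
  moreover have "(\<Union>n. ?A n) = UNIV"
  proof -
    have "x \<in> ?A (nat \<lceil>- x\<rceil>)" for x by simp linarith
    then show ?thesis by blast
  qed
  moreover have "(SUP n. emeasure (laplace lam) (?A n)) = 1"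
  proof (rule LIMSEQ_unique[OF LIMSEQ_SUP])
    show "incseq (\<lambda>n. emeasure (laplace lam) (?A n))"
      by (intro incseq_emeasure) (auto simp: laplace_def incseq_def)
    have "(\<lambda>n. ennreal (1 - lapCDF lam (- real n))) \<longlonglongrightarrow> ennreal (1 - 0)"
      by (intro tendsto_ennrealI tendsto_diff tendsto_const lapCDF_lim_bot[OF lam])
    then show "(\<lambda>n. emeasure (laplace lam) (?A n)) \<longlonglongrightarrow> 1"
      by (simp add: emeasure_laplace_atLeast[OF lam])
  qed
  ultimately show "emeasure (laplace lam) (space (laplace lam)) = 1"
    by (simp add: laplace_def)
qed

lemma measure_laplace_gt:
  assumes lam: "lam > 0"
  shows "measure (laplace lam) {z. y < z} = 1 - lapCDF lam y"
proof -
  have "{y..} = {z. y < z} \<union> {y}" by auto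
  then have "emeasure (laplace lam) {y..} = emeasure (laplace lam) {z. y < z} + emeasure (laplace lam) {y}"
    by (simp, subst plus_emeasure) (auto simp: laplace_def)
  then have "emeasure (laplace lam) {z. y < z} = ennreal (1 - lapCDF lam y)"
    by (simp add: emeasure_laplace_atLeast[OF lam] emeasure_laplace_singleton[OF lam])
  then show ?thesis
    using lapCDF_bounds[OF lam, of y] by (simp add: measure_def)
qed

lemma measure_laplace_le:
  assumes lam: "lam > 0"
  shows "measure (laplace lam) {z. z \<le> y} = lapCDF lam y"
proof -
  interpret prob_space "laplace lam" by (rule prob_space_laplace[OF lam])
  have sp: "space (laplace lam) = UNIV" and st: "sets (laplace lam) = sets borel"
    by (auto simp: laplace_def)
  have "{z. z \<le> y} = space (laplace lam) - {z. y < z}"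
    using sp by auto
  moreover have "{z. y < z} \<in> events" using st by simp
  ultimately have "measure (laplace lam) {z. z \<le> y} = 1 - measure (laplace lam) {z. y < z}"
    using prob_compl by metis
  then show ?thesis by (simp add: measure_laplace_gt[OF lam])
qed

lemma expinv: "exp (- t / lam) * exp (t / lam) = (1::real)"
  by (metis exp_minus_inverse minus_divide_left mult.commute)

lemma expinv2: "exp (t / lam) * exp (- t / lam) = (1::real)"
  by (metis expinv mult.commute)

lemma expmul: "exp (a / lam) * exp (b / lam) = exp (((a::real) + b) / lam)"
  by (simp add: exp_add add_divide_distrib)

lemma lapCDF_mono:
  assumes lam: "lam > 0" and "y \<le> y'"
  shows "lapCDF lam y \<le> lapCDF lam y'"
proof -
  have d: "y / lam \<le> y' / lam" using assms by (simp add: divide_right_mono)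
  show ?thesis
  proof (cases "y' \<le> 0")
    case True
    then show ?thesis using assms d by (simp add: lapCDF_def)
  next
    case False
    note F = False
    show ?thesis
    proof (cases "y \<le> 0")
      case True
      have "exp (y / lam) \<le> 1" using True lam by (simp add: divide_nonpos_pos)
      moreover have "exp (- y' / lam) \<le> 1" using F lam by (simp add: divide_nonpos_pos)
      moreover have "lapCDF lam y = exp (y / lam) / 2" using True by (simp add: lapCDF_def)
      moreover have "lapCDF lam y' = 1 - exp (- y' / lam) / 2" using F by (simp add: lapCDF_def)
      ultimately show ?thesis by linarith
    next
      case False
      then show ?thesis using F assms d by (simp add: lapCDF_def)
    qed
  qed
qed

lemma lapCDF_g_antimono:
  assumes lam: "lam > 0" and "y1 \<le> y2"
  shows "lapCDF lam y2 * exp (- y2 / lam) \<le> lapCDF lam y1 * exp (- y1 / lam)"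
proof -
  have key: "w2 - w2^2/2 \<le> w1 - w1^2/2" if "0 \<le> w2" "w2 \<le> w1" "w1 \<le> 1" for w1 w2 :: real
  proof -
    have "(w1 - w2) * (1 - (w1 + w2) / 2) \<ge> 0" using that by (intro mult_nonneg_nonneg) auto
    moreover have "(w1 - w2) * (1 - (w1 + w2) / 2) = (w1 - w1^2/2) - (w2 - w2^2/2)"
      by (simp add: power2_eq_square field_simps)
    ultimately show ?thesis by linarith
  qed
  have ev: "lapCDF lam y * exp (- y / lam) = (if y \<le> 0 then 1/2 else exp (- y / lam) - (exp (- y / lam))^2 / 2)" for y
  proof (cases "y \<le> 0")
    case True
    have "exp (y / lam) / 2 * exp (- y / lam) = (exp (y / lam) * exp (- y / lam)) / 2" by simp
    then show ?thesis using True by (simp only: lapCDF_def if_True expinv2)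
  next
    case False
    then show ?thesis by (simp add: lapCDF_def algebra_simps power2_eq_square)
  qed
  have w1: "exp (- y / lam) \<le> 1" if "y > 0" for y using that lam by (simp add: divide_nonpos_pos)
  show ?thesis
  proof (cases "y2 \<le> 0")
    case True
    then show ?thesis using assms unfolding ev[of y1] ev[of y2] by simp
  next
    case False
    show ?thesis
    proof (cases "y1 \<le> 0")
      case True
      have "exp (- y2 / lam) - (exp (- y2 / lam))^2 / 2 \<le> 1 - 1^2/2"
        by (rule key) (use w1[of y2] False in auto)
      then show ?thesis using True False unfolding ev[of y1] ev[of y2] by simp
    next
      case F1: False
      have "exp (- y2 / lam) \<le> exp (- y1 / lam)" using assms by (simp add: divide_right_mono)
      then have "exp (- y2 / lam) - (exp (- y2 / lam))^2 / 2 \<le> exp (- y1 / lam) - (exp (- y1 / lam))^2 / 2"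
        by (intro key) (use w1[of y1] F1 in auto)
      then show ?thesis using F1 False unfolding ev[of y1] ev[of y2] by simp
    qed
  qed
qed

lemma lapCDF_h_mono:
  assumes lam: "lam > 0" and "y1 \<le> y2"
  shows "(1 - lapCDF lam y1) * exp (y1 / lam) \<le> (1 - lapCDF lam y2) * exp (y2 / lam)"
proof -
  have key: "w2 - w2^2/2 \<le> w1 - w1^2/2" if "0 \<le> w2" "w2 \<le> w1" "w1 \<le> 1" for w1 w2 :: real
  proof -
    have "(w1 - w2) * (1 - (w1 + w2) / 2) \<ge> 0" using that by (intro mult_nonneg_nonneg) auto
    moreover have "(w1 - w2) * (1 - (w1 + w2) / 2) = (w1 - w1^2/2) - (w2 - w2^2/2)"
      by (simp add: power2_eq_square field_simps)
    ultimately show ?thesis by linarith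
  qed
  have ev: "(1 - lapCDF lam y) * exp (y / lam) = (if y \<ge> 0 then 1/2 else exp (y / lam) - (exp (y / lam))^2 / 2)" for y
  proof (cases "y > 0")
    case True
    have "(1 - (1 - exp (- y / lam) / 2)) * exp (y / lam) = (exp (- y / lam) * exp (y / lam)) / 2" by simp
    then show ?thesis using True by (simp only: lapCDF_def expinv) simp
  next
    case False
    then show ?thesis by (cases "y = 0") (simp_all add: lapCDF_def algebra_simps power2_eq_square)
  qed
  have w1: "exp (y / lam) \<le> 1" if "y < 0" for y using that lam by (simp add: divide_nonpos_pos)
  show ?thesis
  proof (cases "y1 \<ge> 0")
    case True
    then show ?thesis using assms unfolding ev[of y1] ev[of y2] by simp
  next
    case False
    show ?thesis
    proof (cases "y2 \<ge> 0")
      case True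
      have "exp (y1 / lam) - (exp (y1 / lam))^2 / 2 \<le> 1 - 1^2/2"
        by (rule key) (use w1[of y1] False in auto)
      then show ?thesis using True False unfolding ev[of y1] ev[of y2] by simp
    next
      case F1: False
      have "exp (y1 / lam) \<le> exp (y2 / lam)" using assms by (simp add: divide_right_mono)
      then have "exp (y1 / lam) - (exp (y1 / lam))^2 / 2 \<le> exp (y2 / lam) - (exp (y2 / lam))^2 / 2"
        by (intro key) (use w1[of y2] F1 in auto)
      then show ?thesis using F1 False unfolding ev[of y1] ev[of y2] by simp
    qed
  qed
qed

lemma lapCDF_shift_le:
  assumes lam: "lam > 0" and d: "0 \<le> d"
  shows "lapCDF lam (y + d) \<le> exp (d / lam) * lapCDF lam y"
proof -
  have "lapCDF lam (y + d) = (lapCDF lam (y + d) * exp (- (y + d) / lam)) * exp ((y + d) / lam)"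
    by (simp only: mult.assoc expinv mult_1_right)
  also have "\<dots> \<le> (lapCDF lam y * exp (- y / lam)) * exp ((y + d) / lam)"
    by (intro mult_right_mono lapCDF_g_antimono) (use assms in auto)
  also have "\<dots> = lapCDF lam y * (exp (- y / lam) * exp ((y + d) / lam))"
    by (simp only: mult.assoc)
  also have "\<dots> = exp (d / lam) * lapCDF lam y"
    by (simp only: expmul) (simp add: mult.commute)
  finally show ?thesis .
qed

lemma lapCDF_shift_gt:
  assumes lam: "lam > 0" and d: "0 \<le> d"
  shows "1 - lapCDF lam y \<le> exp (d / lam) * (1 - lapCDF lam (y + d))"
proof -
  have "1 - lapCDF lam y = ((1 - lapCDF lam y) * exp (y / lam)) * exp (- y / lam)"
    by (simp only: mult.assoc expinv mult.commute[of "exp (y / lam)"] mult_1_right)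
  also have "\<dots> \<le> ((1 - lapCDF lam (y + d)) * exp ((y + d) / lam)) * exp (- y / lam)"
    by (intro mult_right_mono lapCDF_h_mono) (use assms in auto)
  also have "\<dots> = (1 - lapCDF lam (y + d)) * (exp ((y + d) / lam) * exp (- y / lam))"
    by (simp only: mult.assoc)
  also have "\<dots> = exp (d / lam) * (1 - lapCDF lam (y + d))"
    by (simp only: expmul) (simp add: mult.commute)
  finally show ?thesis .
qed

lemma lapCDF_tail_gt:
  assumes lam: "lam > 0" and "y \<le> y'" "y' \<le> y + 1" "y' \<le> 0"
  shows "1 - lapCDF lam y \<le> exp (exp (y' / lam) / lam) * (1 - lapCDF lam y')"
proof -
  define v where "v = exp (y' / lam)"
  have v0: "0 < v" by (simp add: v_def)
  have v1: "v \<le> 1" using assms by (simp add: v_def divide_nonpos_pos)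
  have yle: "y \<le> 0" using assms by simp
  have "v * exp ((y - y') / lam) = exp (y / lam)"
    unfolding v_def expmul by simp
  moreover have "- ((y' - y) / lam) = (y - y') / lam" by (simp add: minus_divide_left)
  ultimately have "exp (y / lam) = v * exp (- ((y' - y) / lam))"
    by simp
  moreover have "exp (- ((y' - y) / lam)) \<ge> 1 - (y' - y) / lam"
    using exp_ge_add_one_self[of "- ((y' - y) / lam)"] by simp
  moreover have "(y' - y) / lam \<le> 1 / lam" using assms by (simp add: divide_right_mono)
  ultimately have ev: "exp (y / lam) \<ge> v * (1 - 1 / lam)"
  proof -
    assume e1: "exp (y / lam) = v * exp (- ((y' - y) / lam))"
      and e2: "exp (- ((y' - y) / lam)) \<ge> 1 - (y' - y) / lam"
      and e3: "(y' - y) / lam \<le> 1 / lam"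
    have "exp (- ((y' - y) / lam)) \<ge> 1 - 1 / lam" using e2 e3 by linarith
    then have "v * exp (- ((y' - y) / lam)) \<ge> v * (1 - 1 / lam)"
      using v0 by (intro mult_left_mono) auto
    then show ?thesis using e1 by simp
  qed
  have c1: "1 - lapCDF lam y = 1 - exp (y / lam) / 2" using yle by (simp add: lapCDF_def)
  have c2: "1 - lapCDF lam y' = 1 - v / 2" using assms by (simp add: lapCDF_def v_def)
  have "1 - lapCDF lam y \<le> (1 - v / 2) + v / (2 * lam)"
    using c1 ev by (simp add: algebra_simps)
  also have "\<dots> \<le> (1 - v / 2) * (1 + v / lam)"
  proof -
    have "v / (2 * lam) \<le> (1 - v / 2) * (v / lam)"
    proof -
      have "v / (2 * lam) = (1/2) * (v / lam)" by simp
      also have "\<dots> \<le> (1 - v / 2) * (v / lam)"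
        by (intro mult_right_mono) (use v0 v1 lam in auto)
      finally show ?thesis .
    qed
    moreover have "(1 - v/2) * (1 + v/lam) = (1 - v/2) + (1 - v/2)*(v/lam)" by (simp add: distrib_left)
    ultimately show ?thesis by linarith
  qed
  also have "\<dots> \<le> (1 - v / 2) * exp (v / lam)"
    by (intro mult_left_mono) (use v1 exp_ge_add_one_self[of "v / lam"] in auto)
  finally have fin: "1 - lapCDF lam y \<le> (1 - v / 2) * exp (v / lam)" .
  have e2: "exp (exp (y' / lam) / lam) * (1 - lapCDF lam y') = (1 - v / 2) * exp (v / lam)"
    unfolding c2 v_def by (rule mult.commute)
  show ?thesis using fin e2 by linarith
qed

definition blk :: "nat \<Rightarrow> nat \<Rightarrow> bool list \<Rightarrow> bool list" where
  "blk l t v = take (2^l) (drop (2^l * (t - 1)) v)"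

lemma freq_blk: "freq x l t s = length (filter (\<lambda>v. blk l t v = s) x)"
  by (simp add: freq_def blk_def)

definition Dx :: "real \<Rightarrow> real \<Rightarrow> bool list list \<Rightarrow> (nat \<times> nat \<times> bool list \<Rightarrow> real) \<Rightarrow> nat \<Rightarrow> nat \<Rightarrow> bool list \<Rightarrow> bool" where
  "Dx tau mu x Z l t s \<longleftrightarrow> max (real (freq x l t s)) (tau + real (l - 1) * mu - mu) + Z (l, t, s) > tau + real (l - 1) * mu"

lemma phh_Suc: "phh_L tau mu x Z (Suc l) t =
   {s \<in> conc (phh_L tau mu x Z l (2 * t - 1)) (phh_L tau mu x Z l (2 * t)). Dx tau mu x Z (Suc l) t s}"
  by (simp add: Dx_def)

lemma phh_len: "s \<in> phh_L tau mu x Z l t \<Longrightarrow> length s = 2^l"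
proof (induction l arbitrary: t s)
  case 0
  then show ?case by auto
next
  case (Suc l)
  then obtain s1 s2 where "s = s1 @ s2" "s1 \<in> phh_L tau mu x Z l (2 * t - 1)" "s2 \<in> phh_L tau mu x Z l (2 * t)"
    by (auto simp: conc_def)
  with Suc.IH show ?case by auto
qed

lemma phh_cong:
  assumes "1 \<le> t"
    and "\<And>l' t' s. 1 \<le> l' \<Longrightarrow> l' \<le> l \<Longrightarrow> 1 \<le> t' \<Longrightarrow>
      s \<in> conc (phh_L tau mu x Z (l' - 1) (2 * t' - 1)) (phh_L tau mu x Z (l' - 1) (2 * t')) \<Longrightarrow>
      Dx tau mu x Z l' t' s = Dx tau mu x' Z' l' t' s"
  shows "phh_L tau mu x Z l t = phh_L tau mu x' Z' l t"
  using assms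
proof (induction l arbitrary: t)
  case 0
  then show ?case by simp
next
  case (Suc l)
  have c1: "phh_L tau mu x Z l (2 * t - 1) = phh_L tau mu x' Z' l (2 * t - 1)"
    by (rule Suc.IH) (use Suc.prems in auto)
  have c2: "phh_L tau mu x Z l (2 * t) = phh_L tau mu x' Z' l (2 * t)"
    by (rule Suc.IH) (use Suc.prems in auto)
  show ?case
    unfolding phh_Suc c1[symmetric] c2[symmetric]
  proof (rule Collect_cong)
    fix s
    show "(s \<in> conc (phh_L tau mu x Z l (2 * t - 1)) (phh_L tau mu x Z l (2 * t)) \<and> Dx tau mu x Z (Suc l) t s) =
          (s \<in> conc (phh_L tau mu x Z l (2 * t - 1)) (phh_L tau mu x Z l (2 * t)) \<and> Dx tau mu x' Z' (Suc l) t s)"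
      using Suc.prems(2)[of "Suc l" t s] Suc.prems(1) by auto
  qed
qed

lemma blk_child1: "1 \<le> T \<Longrightarrow> blk l (2 * T - 1) v = take (2^l) (blk (Suc l) T v)"
proof -
  assume T: "1 \<le> T"
  have e: "2^l * (2 * T - 1 - 1) = 2^Suc l * (T - 1)" using T by (simp add: algebra_simps)
  show ?thesis unfolding blk_def e by (simp add: min_def)
qed

lemma blk_child2: "1 \<le> T \<Longrightarrow> blk l (2 * T) v = drop (2^l) (blk (Suc l) T v)"
proof -
  assume T: "1 \<le> T"
  have "2^l * (2 * T - 1) = 2^Suc l * (T - 1) + 2^l" using T by (simp add: algebra_simps)
  then show ?thesis by (simp add: blk_def drop_take add.commute)
qed

lemma cand_children:
  assumes T: "1 \<le> T"
    and c: "blk (Suc l) T v \<in> conc (phh_L tau mu x Z l (2 * T - 1)) (phh_L tau mu x Z l (2 * T))"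
  shows "blk l (2 * T - 1) v \<in> phh_L tau mu x Z l (2 * T - 1) \<and> blk l (2 * T) v \<in> phh_L tau mu x Z l (2 * T)"
proof -
  from c obtain s1 s2 where s: "blk (Suc l) T v = s1 @ s2" "s1 \<in> phh_L tau mu x Z l (2 * T - 1)" "s2 \<in> phh_L tau mu x Z l (2 * T)"
    by (auto simp: conc_def)
  have "length s1 = 2^l" using s(2) by (rule phh_len)
  then have "blk l (2 * T - 1) v = s1" "blk l (2 * T) v = s2"
    unfolding blk_child1[OF T] blk_child2[OF T] s(1) by simp_all
  then show ?thesis using s by simp
qed

locale flip =
  fixes k j :: nat and u u' :: "bool list" and x :: "bool list list" and i :: nat
  assumes len_u: "length u = 2^k" and len_u': "length u' = 2^k"
    and j_lt: "j < 2^k" and diff: "u ! j \<noteq> u' ! j" and same: "\<And>m. m \<noteq> j \<Longrightarrow> u ! m = u' ! m"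
    and i_lt: "i < length x" and xi: "x ! i = u"
begin

definition "x' = x[i := u']"
definition tb :: "nat \<Rightarrow> nat" where "tb l = j div 2^l + 1"
definition a :: "nat \<Rightarrow> bool list" where "a l = blk l (tb l) u"
definition b :: "nat \<Rightarrow> bool list" where "b l = blk l (tb l) u'"

lemma len_x': "length x' = length x" by (simp add: x'_def)

lemma tb_ge1[simp]: "1 \<le> tb l" by (simp add: tb_def)

lemma blk_nth: "m < length (blk l t v) \<Longrightarrow> blk l t v ! m = v ! (2^l * (t - 1) + m)"
  by (auto simp: blk_def nth_drop)

lemma len_blk: "length (blk l t v) = min (2^l) (length v - 2^l * (t - 1))"
  by (simp add: blk_def)

lemma blk_same:
  assumes t1: "1 \<le> t" and "t \<noteq> tb l"
  shows "blk l t u = blk l t u'"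
proof (rule nth_equalityI)
  show "length (blk l t u) = length (blk l t u')" by (simp add: len_blk len_u len_u')
  fix m assume m: "m < length (blk l t u)"
  have ml: "m < 2^l" using m by (simp add: len_blk)
  have "2^l * (t - 1) + m \<noteq> j"
  proof
    assume h: "2^l * (t - 1) + m = j"
    have "j div 2^l = (m + (t - 1) * 2^l) div 2^l" using h by (simp add: mult.commute add.commute)
    also have "\<dots> = (t - 1) + m div 2^l" by (rule div_mult_self1) simp
    also have "m div 2^l = 0" using ml by simp
    finally have "j div 2^l = t - 1" by simp
    then have "tb l = t" using t1 by (simp add: tb_def)
    then show False using assms by simp
  qed
  then show "blk l t u ! m = blk l t u' ! m"
    using m by (simp add: blk_nth same len_blk len_u len_u')
qed

lemma a_ne_b: "a l \<noteq> b l"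
proof
  assume h: "a l = b l"
  define m where "m = j mod 2^l"
  have p: "2^l * (tb l - 1) + m = j" by (simp add: tb_def m_def)
  have "m < 2^l" by (simp add: m_def)
  moreover have "m < length u - 2^l * (tb l - 1)" using p j_lt len_u by linarith
  ultimately have ml: "m < length (a l)" by (simp add: a_def len_blk)
  then have "a l ! m = u ! j" using p by (simp add: a_def blk_nth)
  moreover have "b l ! m = u' ! j" using p ml h by (simp add: b_def blk_nth)
  ultimately show False using h diff by simp
qed

lemma x_decomp: "x = take i x @ u # drop (Suc i) x"
  using i_lt xi by (metis id_take_nth_drop)

lemma x'_decomp: "x' = take i x @ u' # drop (Suc i) x"
  using i_lt by (simp add: x'_def upd_conv_take_nth_drop)

lemma freq_rel:
  "real (freq x l t s) + (if blk l t u' = s then 1 else 0) = real (freq x' l t s) + (if blk l t u = s then 1 else 0)"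
proof -
  have "freq x l t s = length (filter (\<lambda>v. blk l t v = s) (take i x)) + (if blk l t u = s then 1 else 0)
      + length (filter (\<lambda>v. blk l t v = s) (drop (Suc i) x))"
    by (subst x_decomp) (simp add: freq_blk)
  moreover have "freq x' l t s = length (filter (\<lambda>v. blk l t v = s) (take i x)) + (if blk l t u' = s then 1 else 0)
      + length (filter (\<lambda>v. blk l t v = s) (drop (Suc i) x))"
    by (subst x'_decomp) (simp add: freq_blk)
  ultimately show ?thesis by (simp split: if_split)
qed

lemma freq_eq:
  assumes t1: "1 \<le> t" and "\<not> (t = tb l \<and> (s = a l \<or> s = b l))"
  shows "freq x l t s = freq x' l t s"
proof (cases "t = tb l")
  case True
  then have "blk l t u \<noteq> s" "blk l t u' \<noteq> s" using assms by (auto simp: a_def b_def)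
  then show ?thesis using freq_rel[of l t s] by simp
next
  case False
  then have "blk l t u = blk l t u'" using t1 by (intro blk_same)
  then show ?thesis using freq_rel[of l t s] by (simp split: if_splits)
qed

lemma freq_a: "real (freq x l (tb l) (a l)) = real (freq x' l (tb l) (a l)) + 1"
  using freq_rel[of l "tb l" "a l"] a_ne_b[of l] by (simp add: a_def b_def)

lemma freq_b: "real (freq x' l (tb l) (b l)) = real (freq x l (tb l) (b l)) + 1"
  using freq_rel[of l "tb l" "b l"] a_ne_b[of l] by (simp add: a_def b_def)

lemma tb_child: "tb l = 2 * tb (Suc l) - 1 \<or> tb l = 2 * tb (Suc l)"
proof -
  have e: "j div 2^Suc l = (j div 2^l) div 2"
    unfolding power_Suc2 by (rule div_mult2_eq)
  have g: "n + 1 = 2 * (n div 2 + 1) - 1 \<or> n + 1 = 2 * (n div 2 + 1)" for n :: nat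
    by presburger
  show ?thesis unfolding tb_def e by (rule g)
qed

lemma blk_tb_child: "blk l (tb l) v = (if tb l = 2 * tb (Suc l) - 1 then take (2^l) else drop (2^l)) (blk (Suc l) (tb (Suc l)) v)"
proof (cases "tb l = 2 * tb (Suc l) - 1")
  case True
  then show ?thesis using blk_child1[OF tb_ge1[of "Suc l"], of l v] by simp
next
  case False
  then have "tb l = 2 * tb (Suc l)" using tb_child[of l] by simp
  then show ?thesis using False blk_child2[OF tb_ge1[of "Suc l"], of l v] by simp
qed

lemma blk_tb_cong: "blk (Suc l) (tb (Suc l)) v = blk (Suc l) (tb (Suc l)) w \<Longrightarrow> blk l (tb l) v = blk l (tb l) w"
  by (simp add: blk_tb_child[of l v] blk_tb_child[of l w])

lemma length_filter_mono': "(\<And>v. P v \<Longrightarrow> Q v) \<Longrightarrow> length (filter P xs) \<le> length (filter Q xs)"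
  by (induction xs) auto

lemma freq_mono:
  "freq y (Suc l) (tb (Suc l)) (blk (Suc l) (tb (Suc l)) w) \<le> freq y l (tb l) (blk l (tb l) w)"
  unfolding freq_blk by (rule length_filter_mono') (rule blk_tb_cong)

lemma chain_step:
  assumes "blk (Suc l) (tb (Suc l)) w \<in> conc (phh_L tau mu y Z l (2 * tb (Suc l) - 1)) (phh_L tau mu y Z l (2 * tb (Suc l)))"
  shows "blk l (tb l) w \<in> phh_L tau mu y Z l (tb l)"
  using cand_children[OF tb_ge1[of "Suc l"] assms] tb_child[of l] by (elim disjE) simp_all

lemma chain_all:
  assumes "blk (Suc l) (tb (Suc l)) w \<in> conc (phh_L tau mu y Z l (2 * tb (Suc l) - 1)) (phh_L tau mu y Z l (2 * tb (Suc l)))"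
  shows "\<forall>l'. 1 \<le> l' \<and> l' \<le> l \<longrightarrow> Dx tau mu y Z l' (tb l') (blk l' (tb l') w)"
  using assms
proof (induction l)
  case 0
  then show ?case by simp
next
  case (Suc l)
  have m: "blk (Suc l) (tb (Suc l)) w \<in> phh_L tau mu y Z (Suc l) (tb (Suc l))"
    by (rule chain_step[OF Suc.prems])
  then have c: "blk (Suc l) (tb (Suc l)) w \<in> conc (phh_L tau mu y Z l (2 * tb (Suc l) - 1)) (phh_L tau mu y Z l (2 * tb (Suc l)))"
    and d: "Dx tau mu y Z (Suc l) (tb (Suc l)) (blk (Suc l) (tb (Suc l)) w)"
    unfolding phh_Suc mem_Collect_eq by blast+
  show ?case
  proof (intro allI impI)
    fix l' assume l': "1 \<le> l' \<and> l' \<le> Suc l"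
    show "Dx tau mu y Z l' (tb l') (blk l' (tb l') w)"
    proof (cases "l' = Suc l")
      case True
      then show ?thesis using d by simp
    next
      case False
      then show ?thesis using Suc.IH[OF c] l' by simp
    qed
  qed
qed

end

locale flip2 = flip +
  fixes tau mu :: real
  assumes tau_pos: "tau > 0" and mu_gt: "mu > 1"
begin

definition thr :: "nat \<Rightarrow> real" where "thr l = tau + real (l - 1) * mu"
definition yv :: "bool list list \<Rightarrow> nat \<Rightarrow> bool list \<Rightarrow> real" where
  "yv y l s = thr l - max (real (freq y l (tb l) s)) (thr l - mu)"
definition ia :: "nat \<Rightarrow> nat \<times> nat \<times> bool list" where "ia l = (l, tb l, a l)"
definition ib :: "nat \<Rightarrow> nat \<times> nat \<times> bool list" where "ib l = (l, tb l, b l)"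
definition Cset :: "(nat \<times> nat \<times> bool list) set" where "Cset = ia ` {1..k} \<union> ib ` {1..k}"
definition BIG :: real where "BIG = mu + 1"
definition SMALL :: real where "SMALL = - real (length x)"
definition cc :: "nat \<Rightarrow> nat \<Rightarrow> nat \<times> nat \<times> bool list \<Rightarrow> real" where
  "cc sa sb idx = (case idx of (l, t, s) \<Rightarrow>
     if s = a l then (if l < sa then BIG else SMALL) else (if l < sb then BIG else SMALL))"
definition eva :: "bool list list \<Rightarrow> nat \<Rightarrow> (nat \<times> nat \<times> bool list \<Rightarrow> real) \<Rightarrow> bool" where
  "eva y sa c \<longleftrightarrow> (\<forall>l. 1 \<le> l \<and> l < sa \<longrightarrow> yv y l (a l) < c (ia l)) \<and> (sa \<le> k \<longrightarrow> \<not> yv y sa (a sa) < c (ia sa))"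
definition evb :: "bool list list \<Rightarrow> nat \<Rightarrow> (nat \<times> nat \<times> bool list \<Rightarrow> real) \<Rightarrow> bool" where
  "evb y sb c \<longleftrightarrow> (\<forall>l. 1 \<le> l \<and> l < sb \<longrightarrow> yv y l (b l) < c (ib l)) \<and> (sb \<le> k \<longrightarrow> \<not> yv y sb (b sb) < c (ib sb))"

lemma Dx_iff: "Dx tau mu y Z l (tb l) s \<longleftrightarrow> yv y l s < Z (l, tb l, s)"
  unfolding Dx_def yv_def thr_def by linarith

lemma yv_le_mu: "yv y l s \<le> mu"
  unfolding yv_def by linarith

lemma thr_pos: "thr l > 0"
  unfolding thr_def using tau_pos mu_gt by (simp add: add_pos_nonneg)

lemma freq_le_len: "freq y l t s \<le> length y"
  unfolding freq_blk by (rule length_filter_le)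

lemma yv_ge_small: "length y = length x \<Longrightarrow> SMALL \<le> yv y l s"
proof -
  assume ly: "length y = length x"
  have "real (freq y l (tb l) s) \<le> real (length x)" using freq_le_len[of y l "tb l" s] ly by simp
  then show ?thesis unfolding yv_def SMALL_def using thr_pos[of l] mu_gt by linarith
qed

lemma big_pass: "yv y l s < BIG"
  using yv_le_mu[of y l s] by (simp add: BIG_def)

lemma ia_inj: "ia l = ia l' \<Longrightarrow> l = l'" by (simp add: ia_def)
lemma ib_inj: "ib l = ib l' \<Longrightarrow> l = l'" by (simp add: ib_def)
lemma ia_ne_ib: "ia l \<noteq> ib l'"
  using a_ne_b by (auto simp: ia_def ib_def)

lemma cc_ia: "cc sa sb (ia l) = (if l < sa then BIG else SMALL)"
  by (simp add: cc_def ia_def)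
lemma cc_ib: "cc sa sb (ib l) = (if l < sb then BIG else SMALL)"
  using a_ne_b[of l] by (simp add: cc_def ib_def)

lemma Cset_cases: "idx \<in> Cset \<Longrightarrow> (\<exists>l. 1 \<le> l \<and> l \<le> k \<and> (idx = ia l \<or> idx = ib l))"
  by (auto simp: Cset_def)

lemma K1:
  assumes ly: "length y = length x" and sa: "1 \<le> sa" and sb: "1 \<le> sb"
    and ZZ: "\<And>idx. idx \<notin> Cset \<Longrightarrow> Z idx = Z' idx"
    and Zc: "\<And>idx. idx \<in> Cset \<Longrightarrow> Z' idx = cc sa sb idx"
    and ea: "eva y sa Z" and eb: "evb y sb Z"
  shows "phh_L tau mu y Z k 1 = phh_L tau mu y Z' k 1"
proof (rule phh_cong)
  fix l' t' s
  assume l'1: "1 \<le> l'" and l'k: "l' \<le> k" and t'1: "1 \<le> t'"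
    and cand: "s \<in> conc (phh_L tau mu y Z (l' - 1) (2 * t' - 1)) (phh_L tau mu y Z (l' - 1) (2 * t'))"
  show "Dx tau mu y Z l' t' s = Dx tau mu y Z' l' t' s"
  proof (cases "(l', t', s) \<in> Cset")
    case False
    then show ?thesis using ZZ[OF False] by (simp add: Dx_def)
  next
    case True
    obtain l0 where l': "l' = Suc l0" using l'1 by (cases l') auto
    from Cset_cases[OF True] consider "(l', t', s) = ia l'" | "(l', t', s) = ib l'"
      by (auto simp: ia_def ib_def)
    then show ?thesis
    proof cases
      case 1
      then have t': "t' = tb l'" and s: "s = a l'" by (auto simp: ia_def)
      have "blk (Suc l0) (tb (Suc l0)) u \<in> conc (phh_L tau mu y Z l0 (2 * tb (Suc l0) - 1)) (phh_L tau mu y Z l0 (2 * tb (Suc l0)))"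
        using cand by (simp add: l' t' s a_def)
      from chain_all[OF this]
      have pass: "\<And>l''. 1 \<le> l'' \<Longrightarrow> l'' < l' \<Longrightarrow> yv y l'' (a l'') < Z (ia l'')"
        by (auto simp: Dx_iff a_def ia_def l')
      have "l' \<le> sa"
      proof (rule ccontr)
        assume "\<not> l' \<le> sa"
        then have "sa < l'" "sa \<le> k" using l'k by auto
        then show False using ea pass[of sa] sa by (auto simp: eva_def)
      qed
      show ?thesis
      proof (cases "l' < sa")
        case True
        have "yv y l' (a l') < Z (ia l')" using ea True l'1 by (auto simp: eva_def)
        moreover have "Z' (ia l') = BIG" using Zc True \<open>(l', t', s) = ia l'\<close> \<open>(l', t', s) \<in> Cset\<close> by (simp add: cc_ia)
        ultimately show ?thesis using big_pass[of y l' "a l'"]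
          by (simp add: t' s Dx_iff ia_def[symmetric])
      next
        case False
        then have "l' = sa" using \<open>l' \<le> sa\<close> by simp
        then have "\<not> yv y l' (a l') < Z (ia l')" using ea l'k by (auto simp: eva_def)
        moreover have "Z' (ia l') = SMALL" using Zc False \<open>(l', t', s) = ia l'\<close> \<open>(l', t', s) \<in> Cset\<close> by (simp add: cc_ia)
        ultimately show ?thesis using yv_ge_small[OF ly, of l' "a l'"]
          by (simp add: t' s Dx_iff ia_def[symmetric])
      qed
    next
      case 2
      then have t': "t' = tb l'" and s: "s = b l'" by (auto simp: ib_def)
      have "blk (Suc l0) (tb (Suc l0)) u' \<in> conc (phh_L tau mu y Z l0 (2 * tb (Suc l0) - 1)) (phh_L tau mu y Z l0 (2 * tb (Suc l0)))"
        using cand by (simp add: l' t' s b_def)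
      from chain_all[OF this]
      have pass: "\<And>l''. 1 \<le> l'' \<Longrightarrow> l'' < l' \<Longrightarrow> yv y l'' (b l'') < Z (ib l'')"
        by (auto simp: Dx_iff b_def ib_def l')
      have "l' \<le> sb"
      proof (rule ccontr)
        assume "\<not> l' \<le> sb"
        then have "sb < l'" "sb \<le> k" using l'k by auto
        then show False using eb pass[of sb] sb by (auto simp: evb_def)
      qed
      show ?thesis
      proof (cases "l' < sb")
        case True
        have "yv y l' (b l') < Z (ib l')" using eb True l'1 by (auto simp: evb_def)
        moreover have "Z' (ib l') = BIG" using Zc True \<open>(l', t', s) = ib l'\<close> \<open>(l', t', s) \<in> Cset\<close> by (simp add: cc_ib)
        ultimately show ?thesis using big_pass[of y l' "b l'"]
          by (simp add: t' s Dx_iff ib_def[symmetric])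
      next
        case False
        then have "l' = sb" using \<open>l' \<le> sb\<close> by simp
        then have "\<not> yv y l' (b l') < Z (ib l')" using eb l'k by (auto simp: evb_def)
        moreover have "Z' (ib l') = SMALL" using Zc False \<open>(l', t', s) = ib l'\<close> \<open>(l', t', s) \<in> Cset\<close> by (simp add: cc_ib)
        ultimately show ?thesis using yv_ge_small[OF ly, of l' "b l'"]
          by (simp add: t' s Dx_iff ib_def[symmetric])
      qed
    qed
  qed
qed simp

lemma K2:
  assumes Zc: "\<And>idx. idx \<in> Cset \<Longrightarrow> Z idx = BIG \<or> Z idx = SMALL"
  shows "phh_L tau mu x Z k 1 = phh_L tau mu x' Z k 1"
proof (rule phh_cong)
  fix l' t' :: nat and s :: "bool list"
  assume l'1: "1 \<le> l'" and l'k: "l' \<le> k" and t'1: "1 \<le> t'"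
    and "s \<in> conc (phh_L tau mu x Z (l' - 1) (2 * t' - 1)) (phh_L tau mu x Z (l' - 1) (2 * t'))"
  show "Dx tau mu x Z l' t' s = Dx tau mu x' Z l' t' s"
  proof (cases "t' = tb l' \<and> (s = a l' \<or> s = b l')")
    case False
    then have "freq x l' t' s = freq x' l' t' s" using t'1 by (intro freq_eq)
    then show ?thesis by (simp add: Dx_def)
  next
    case True
    then have inC: "(l', t', s) \<in> Cset" using l'1 l'k by (auto simp: Cset_def ia_def ib_def)
    have lx: "length x' = length x" by (rule len_x')
    from Zc[OF inC] show ?thesis
    proof
      assume "Z (l', t', s) = BIG"
      then show ?thesis using True big_pass[of x l' s] big_pass[of x' l' s] by (auto simp: Dx_iff)
    next
      assume "Z (l', t', s) = SMALL"
      then show ?thesis using True yv_ge_small[of x l' s] yv_ge_small[OF lx, of l' s] by (auto simp: Dx_iff)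
    qed
  qed
qed simp

lemma eva_exists: "\<exists>sa \<in> {1..k+1}. eva y sa c"
proof (cases "\<forall>l. 1 \<le> l \<and> l \<le> k \<longrightarrow> yv y l (a l) < c (ia l)")
  case True
  then show ?thesis by (intro bexI[of _ "k+1"]) (auto simp: eva_def)
next
  case False
  define P where "P l \<longleftrightarrow> 1 \<le> l \<and> l \<le> k \<and> \<not> yv y l (a l) < c (ia l)" for l
  from False obtain l0 where "P l0" by (auto simp: P_def)
  define m where "m = (LEAST l. P l)"
  have Pm: "P m" unfolding m_def by (rule LeastI) fact
  have "\<not> P l" if "l < m" for l using that not_less_Least unfolding m_def by blast
  then have "eva y m c" using Pm by (auto simp: eva_def P_def)
  then show ?thesis using Pm by (auto simp: P_def)
qed

lemma evb_exists: "\<exists>sb \<in> {1..k+1}. evb y sb c"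
proof (cases "\<forall>l. 1 \<le> l \<and> l \<le> k \<longrightarrow> yv y l (b l) < c (ib l)")
  case True
  then show ?thesis by (intro bexI[of _ "k+1"]) (auto simp: evb_def)
next
  case False
  define P where "P l \<longleftrightarrow> 1 \<le> l \<and> l \<le> k \<and> \<not> yv y l (b l) < c (ib l)" for l
  from False obtain l0 where "P l0" by (auto simp: P_def)
  define m where "m = (LEAST l. P l)"
  have Pm: "P m" unfolding m_def by (rule LeastI) fact
  have "\<not> P l" if "l < m" for l using that not_less_Least unfolding m_def by blast
  then have "evb y m c" using Pm by (auto simp: evb_def P_def)
  then show ?thesis using Pm by (auto simp: P_def)
qed

lemma eva_unique: "eva y sa c \<Longrightarrow> eva y sa' c \<Longrightarrow> sa \<in> {1..k+1} \<Longrightarrow> sa' \<in> {1..k+1} \<Longrightarrow> sa = sa'"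
proof (rule ccontr)
  assume h: "eva y sa c" "eva y sa' c" "sa \<in> {1..k+1}" "sa' \<in> {1..k+1}" "sa \<noteq> sa'"
  show False
  proof (cases "sa < sa'")
    case True
    then show False using h by (auto simp: eva_def)
  next
    case False
    then have "sa' < sa" using h by simp
    then show False using h by (auto simp: eva_def)
  qed
qed

lemma evb_unique: "evb y sb c \<Longrightarrow> evb y sb' c \<Longrightarrow> sb \<in> {1..k+1} \<Longrightarrow> sb' \<in> {1..k+1} \<Longrightarrow> sb = sb'"
proof (rule ccontr)
  assume h: "evb y sb c" "evb y sb' c" "sb \<in> {1..k+1}" "sb' \<in> {1..k+1}" "sb \<noteq> sb'"
  show False
  proof (cases "sb < sb'")
    case True
    then show False using h by (auto simp: evb_def)
  next
    case False
    then have "sb' < sb" using h by simp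
    then show False using h by (auto simp: evb_def)
  qed
qed

lemma Cset_sub: "Cset \<subseteq> noise_idx k"
proof -
  have tbk: "tb l \<le> 2^k div 2^l" and la: "length (a l) = 2^l" and lb: "length (b l) = 2^l"
    if l: "1 \<le> l" "l \<le> k" for l
  proof -
    have e: "2^k div 2^l = (2::nat)^(k - l)" using l by (simp add: power_diff)
    have "j < 2^(k-l) * 2^l" using j_lt l by (simp add: power_add[symmetric])
    then have "j div 2^l < 2^(k-l)" by (simp add: div_less_iff_less_mult)
    then show t: "tb l \<le> 2^k div 2^l" by (simp add: tb_def e)
    have "2^l * tb l \<le> 2^l * 2^(k-l)" using t e by simp
    also have "\<dots> = 2^k" using l by (simp add: power_add[symmetric])
    finally have m: "2^l * tb l \<le> 2^k" .
    have "2^l * (tb l - 1) + 2^l = 2^l * tb l" by (simp add: tb_def algebra_simps)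
    then have "2^l \<le> 2^k - 2^l * (tb l - 1)" using m by linarith
    then show "length (a l) = 2^l" "length (b l) = 2^l"
      by (simp_all add: a_def b_def len_blk len_u len_u')
  qed
  show ?thesis
    unfolding Cset_def noise_idx_def using tbk la lb tb_ge1 by (auto simp: ia_def ib_def)
qed

end

lemma finite_noise_idx: "finite (noise_idx k)"
proof -
  have "noise_idx k \<subseteq> {1..k} \<times> {1..(2::nat)^k} \<times> {s. set s \<subseteq> UNIV \<and> length s \<le> 2^k}"
  proof
    fix idx assume "idx \<in> noise_idx k"
    then obtain l t s where idx: "idx = (l, t, s)" "1 \<le> l" "l \<le> k" "1 \<le> t" "t \<le> 2^k div 2^l" "length s = 2^l"
      by (auto simp: noise_idx_def)
    have "t \<le> 2^k" using idx(5) div_le_dividend order_trans by blast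
    moreover have "(2::nat)^l \<le> 2^k" using idx(3) by (simp add: power_increasing)
    ultimately show "idx \<in> {1..k} \<times> {1..(2::nat)^k} \<times> {s. set s \<subseteq> UNIV \<and> length s \<le> 2^k}"
      using idx by auto
  qed
  moreover have "finite ({1..k} \<times> {1..(2::nat)^k} \<times> {s::bool list. set s \<subseteq> UNIV \<and> length s \<le> 2^k})"
    by (intro finite_cartesian_product finite_lists_length_le) auto
  ultimately show ?thesis by (rule finite_subset)
qed

definition Lf :: "real \<Rightarrow> real \<Rightarrow> real \<Rightarrow> real" where
  "Lf lam mu z = (if z < mu then exp (min 0 (z + 1) / lam) / lam else 0)"

definition Gp :: "real \<Rightarrow> real \<Rightarrow> real \<Rightarrow> real" where
  "Gp lam mu z = (1 / lam) / (1 - exp (- mu / lam)) * exp (min 0 (z + 1) / lam)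
     + (if z \<ge> -1 then 1 / lam else 0) + (if z \<ge> mu - 1 then 1 / lam else 0)"

context
  fixes lam mu :: real
  assumes lam: "lam > 0" and mu: "mu > 1"
begin

lemma q_bounds: "0 < exp (- mu / lam)" "exp (- mu / lam) < 1"
  using lam mu by (auto simp: divide_neg_pos)

lemma r_ge1: "1 \<le> 1 / (1 - exp (- mu / lam))"
  using q_bounds by (simp add: field_simps)

lemma Ez_mono: "z1 \<le> z2 \<Longrightarrow> exp (min 0 (z1 + 1) / lam) \<le> exp (min 0 (z2 + 1) / lam)"
  using lam by (simp add: divide_right_mono)

lemma Ez_le1: "exp (min 0 (z + 1) / lam) \<le> 1"
  using lam by (simp add: divide_nonpos_pos)

lemma Gp_mono: "z1 \<le> z2 \<Longrightarrow> Gp lam mu z1 \<le> Gp lam mu z2"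
proof -
  assume z: "z1 \<le> z2"
  have c: "0 \<le> (1 / lam) / (1 - exp (- mu / lam))" using lam q_bounds by simp
  have "(1 / lam) / (1 - exp (- mu / lam)) * exp (min 0 (z1 + 1) / lam)
      \<le> (1 / lam) / (1 - exp (- mu / lam)) * exp (min 0 (z2 + 1) / lam)"
    by (rule mult_left_mono[OF Ez_mono[OF z] c])
  moreover have "(if z1 \<ge> -1 then 1 / lam else 0) \<le> (if z2 \<ge> -1 then 1 / lam else (0::real))"
    using z lam by auto
  moreover have "(if z1 \<ge> mu - 1 then 1 / lam else 0) \<le> (if z2 \<ge> mu - 1 then 1 / lam else (0::real))"
    using z lam by auto
  ultimately show ?thesis unfolding Gp_def by linarith
qed

lemma Gp_le: "Gp lam mu z \<le> (2 + 1 / (1 - exp (- mu / lam))) / lam"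
proof -
  have c: "0 \<le> (1 / lam) / (1 - exp (- mu / lam))" using lam q_bounds by simp
  have "(1 / lam) / (1 - exp (- mu / lam)) * exp (min 0 (z + 1) / lam) \<le> (1 / lam) / (1 - exp (- mu / lam)) * 1"
    by (rule mult_left_mono[OF Ez_le1 c])
  moreover have "(if z \<ge> -1 then 1 / lam else 0) \<le> 1 / lam" "(if z \<ge> mu - 1 then 1 / lam else 0) \<le> 1 / lam"
    using lam by auto
  moreover have "(2 + 1 / (1 - exp (- mu / lam))) / lam = 1 / lam + 1 / lam + (1 / lam) / (1 - exp (- mu / lam))"
    by (simp add: add_divide_distrib)
  ultimately show ?thesis unfolding Gp_def by linarith
qed

lemma Gp_nonneg: "0 \<le> Gp lam mu z"
  using lam q_bounds unfolding Gp_def by (auto intro!: add_nonneg_nonneg mult_nonneg_nonneg)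

lemma Lf_nonneg: "0 \<le> Lf lam mu z"
  using lam unfolding Lf_def by auto

lemma Gp_step: "Gp lam mu (z - mu) + Lf lam mu z \<le> Gp lam mu z"
proof -
  define A where "A = (1 / lam) / (1 - exp (- mu / lam))"
  define q where "q = exp (- mu / lam)"
  have A0: "0 \<le> A" using lam q_bounds by (simp add: A_def)
  have Aq: "A * q + 1 / lam = A"
    using q_bounds lam by (simp add: A_def q_def field_simps)
  consider "z < -1" | "-1 \<le> z \<and> z < mu - 1" | "mu - 1 \<le> z \<and> z < mu" | "mu \<le> z" by linarith
  then show ?thesis
  proof cases
    case 1
    have e1: "exp (min 0 (z - mu + 1) / lam) = q * exp (min 0 (z + 1) / lam)"
    proof -
      have "min 0 (z - mu + 1) / lam = - mu / lam + (z + 1) / lam" using 1 mu lam by (simp add: field_simps)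
      then have e: "exp (min 0 (z - mu + 1) / lam) = exp (- mu / lam + (z + 1) / lam)" by simp
      have m: "min 0 (z + 1) = z + 1" using 1 by simp
      show ?thesis unfolding e m q_def by (rule exp_add)
    qed
    have "Gp lam mu (z - mu) = A * exp (min 0 (z - mu + 1) / lam)"
      using 1 mu unfolding Gp_def A_def by simp
    also have "\<dots> = A * q * exp (min 0 (z + 1) / lam)" unfolding e1 by simp
    moreover have "Lf lam mu z = exp (min 0 (z + 1) / lam) / lam" using 1 mu by (simp add: Lf_def)
    moreover have "Gp lam mu z = A * exp (min 0 (z + 1) / lam)" using 1 mu unfolding Gp_def A_def by simp
    moreover have "A * q * exp (min 0 (z + 1) / lam) + exp (min 0 (z + 1) / lam) / lam
        = (A * q + 1 / lam) * exp (min 0 (z + 1) / lam)" by (simp add: algebra_simps)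
    ultimately show ?thesis using Aq by simp
  next
    case 2
    have "Gp lam mu (z - mu) = A * exp (min 0 (z - mu + 1) / lam)"
      using 2 unfolding Gp_def A_def by simp
    also have "\<dots> \<le> A * exp (min 0 (z + 1) / lam)"
      by (rule mult_left_mono[OF Ez_mono A0]) (use mu in simp)
    finally have g: "Gp lam mu (z - mu) \<le> A * exp (min 0 (z + 1) / lam)" .
    have "Lf lam mu z = 1 / lam" using 2 by (simp add: Lf_def)
    moreover have "Gp lam mu z = A * exp (min 0 (z + 1) / lam) + 1 / lam" using 2 unfolding Gp_def A_def by simp
    ultimately show ?thesis using g by linarith
  next
    case 3
    have "Gp lam mu (z - mu) \<le> A * exp (min 0 (z - mu + 1) / lam) + 1 / lam"
      using 3 mu lam unfolding Gp_def A_def by simp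
    also have "A * exp (min 0 (z - mu + 1) / lam) \<le> A * exp (min 0 (z + 1) / lam)"
      by (rule mult_left_mono[OF Ez_mono A0]) (use mu in simp)
    finally have g: "Gp lam mu (z - mu) \<le> A * exp (min 0 (z + 1) / lam) + 1 / lam" by simp
    have "Lf lam mu z = 1 / lam" using 3 mu by (simp add: Lf_def)
    moreover have "Gp lam mu z = A * exp (min 0 (z + 1) / lam) + 1 / lam + 1 / lam" using 3 mu unfolding Gp_def A_def by simp
    ultimately show ?thesis using g by linarith
  next
    case 4
    then have "Lf lam mu z = 0" by (simp add: Lf_def)
    moreover have "Gp lam mu (z - mu) \<le> Gp lam mu z" by (rule Gp_mono) (use mu in simp)
    ultimately show ?thesis by simp
  qed
qed

lemma Lf_sum:
  assumes inc: "\<And>l. 1 \<le> l \<Longrightarrow> z (Suc l) \<ge> z l + mu"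
  shows "(\<Sum>l\<in>{1..n}. Lf lam mu (z l)) \<le> (2 + 1 / (1 - exp (- mu / lam))) / lam"
proof -
  have H: "(\<Sum>l\<in>{1..n}. Lf lam mu (z l)) \<le> Gp lam mu (z n)" if "1 \<le> n" for n
    using that
  proof (induction n rule: nat_induct_at_least)
    case base
    have "Lf lam mu (z 1) \<le> Gp lam mu (z 1 - mu) + Lf lam mu (z 1)" using Gp_nonneg by simp
    also have "\<dots> \<le> Gp lam mu (z 1)" by (rule Gp_step)
    finally show ?case by simp
  next
    case (Suc n)
    have "(\<Sum>l\<in>{1..Suc n}. Lf lam mu (z l)) = (\<Sum>l\<in>{1..n}. Lf lam mu (z l)) + Lf lam mu (z (Suc n))"
      using Suc.hyps by simp
    also have "\<dots> \<le> Gp lam mu (z n) + Lf lam mu (z (Suc n))" using Suc.IH by simp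
    also have "Gp lam mu (z n) \<le> Gp lam mu (z (Suc n) - mu)"
      by (rule Gp_mono) (use inc[OF Suc.hyps] in simp)
    also have "Gp lam mu (z (Suc n) - mu) + Lf lam mu (z (Suc n)) \<le> Gp lam mu (z (Suc n))"
      by (rule Gp_step)
    finally show ?case by simp
  qed
  show ?thesis
  proof (cases "n = 0")
    case True
    then show ?thesis using lam r_ge1 by simp
  next
    case False
    then have "(\<Sum>l\<in>{1..n}. Lf lam mu (z l)) \<le> Gp lam mu (z n)" by (intro H) simp
    then show ?thesis using Gp_le[of "z n"] by linarith
  qed
qed

end

lemma prod_le_exp:
  fixes U V c :: "'a \<Rightarrow> real"
  assumes "finite A" and "\<And>l. l \<in> A \<Longrightarrow> 0 \<le> U l \<and> U l \<le> exp (c l) * V l"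
  shows "prod U A \<le> exp (sum c A) * prod V A"
proof -
  have "prod U A \<le> prod (\<lambda>l. exp (c l) * V l) A"
    by (rule prod_mono) (use assms(2) in auto)
  also have "\<dots> = exp (sum c A) * prod V A"
    by (simp add: prod.distrib exp_sum[OF assms(1)])
  finally show ?thesis .
qed

context
  fixes lam mu :: real
  assumes lam: "lam > 0" and mu: "mu > 1"
begin

lemma pass_a: "1 - lapCDF lam (min z mu) \<le> exp (Lf lam mu z) * (1 - lapCDF lam (min (z + 1) mu))"
proof -
  consider "mu \<le> z" | "z < mu" "z + 1 \<le> 0" | "z < mu" "0 < z + 1" by linarith
  then show ?thesis
  proof cases
    case 1
    then show ?thesis by (simp add: Lf_def)
  next
    case 2
    then have "min z mu = z" "min (z + 1) mu = z + 1" "min 0 (z + 1) = z + 1" using mu by auto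
    moreover have "1 - lapCDF lam z \<le> exp (exp ((z + 1) / lam) / lam) * (1 - lapCDF lam (z + 1))"
      by (rule lapCDF_tail_gt) (use lam 2 in auto)
    ultimately show ?thesis using 2 by (simp add: Lf_def)
  next
    case 3
    define d where "d = min (z + 1) mu - z"
    have d0: "0 \<le> d" "d \<le> 1" using 3 by (auto simp: d_def)
    have "1 - lapCDF lam z \<le> exp (d / lam) * (1 - lapCDF lam (z + d))"
      by (rule lapCDF_shift_gt) (use lam d0 in auto)
    also have "\<dots> \<le> exp (1 / lam) * (1 - lapCDF lam (z + d))"
      by (rule mult_right_mono) (use lam d0 lapCDF_bounds[OF lam, of "z + d"] in \<open>auto simp: divide_right_mono\<close>)
    finally have "1 - lapCDF lam z \<le> exp (1 / lam) * (1 - lapCDF lam (z + d))" .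
    moreover have "z + d = min (z + 1) mu" by (simp add: d_def)
    moreover have "min z mu = z" "min 0 (z + 1) = 0" using 3 by auto
    ultimately show ?thesis using 3 by (simp add: Lf_def)
  qed
qed

lemma fail_a: "lapCDF lam (min z mu) \<le> lapCDF lam (min (z + 1) mu)"
  by (rule lapCDF_mono[OF lam]) linarith

lemma pass_b: "1 - lapCDF lam (min w mu) \<le> 1 - lapCDF lam (min (w - 1) mu)"
  using lapCDF_mono[OF lam, of "min (w - 1) mu" "min w mu"] by linarith

lemma fail_b: "lapCDF lam (min w mu) \<le> exp (1 / lam) * lapCDF lam (min (w - 1) mu)"
proof -
  define d where "d = min w mu - min (w - 1) mu"
  have d0: "0 \<le> d" "d \<le> 1" by (auto simp: d_def)
  have "lapCDF lam (min (w - 1) mu + d) \<le> exp (d / lam) * lapCDF lam (min (w - 1) mu)"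
    by (rule lapCDF_shift_le) (use lam d0 in auto)
  also have "\<dots> \<le> exp (1 / lam) * lapCDF lam (min (w - 1) mu)"
    by (rule mult_right_mono) (use lam d0 lapCDF_bounds[OF lam, of "min (w - 1) mu"] in \<open>auto simp: divide_right_mono\<close>)
  finally show ?thesis by (simp add: d_def)
qed

end

context flip2
begin

definition Qa :: "real \<Rightarrow> bool list list \<Rightarrow> nat \<Rightarrow> real" where
  "Qa lam y sa = (\<Prod>l\<in>{1..k}. if l < sa then 1 - lapCDF lam (yv y l (a l))
      else if l = sa then lapCDF lam (yv y l (a l)) else 1)"

definition Qb :: "real \<Rightarrow> bool list list \<Rightarrow> nat \<Rightarrow> real" where
  "Qb lam y sb = (\<Prod>l\<in>{1..k}. if l < sb then 1 - lapCDF lam (yv y l (b l))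
      else if l = sb then lapCDF lam (yv y l (b l)) else 1)"

lemma yv_min: "yv y l s = min (thr l - real (freq y l (tb l) s)) mu"
  unfolding yv_def by (simp add: min_def max_def)

lemma Qa_nonneg: "lam > 0 \<Longrightarrow> 0 \<le> Qa lam y sa"
  unfolding Qa_def using lapCDF_bounds by (intro prod_nonneg) auto

lemma Qb_nonneg: "lam > 0 \<Longrightarrow> 0 \<le> Qb lam y sb"
  unfolding Qb_def using lapCDF_bounds by (intro prod_nonneg) auto

lemma Qa_bound:
  assumes lam: "lam > 0"
  shows "Qa lam x sa \<le> exp ((2 + 1 / (1 - exp (- mu / lam))) / lam) * Qa lam x' sa"
proof -
  define z where "z l = thr l - real (freq x l (tb l) (a l))" for l
  have yx: "yv x l (a l) = min (z l) mu" for l by (simp add: yv_min z_def)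
  have yx': "yv x' l (a l) = min (z l + 1) mu" for l using freq_a[of l] by (simp add: yv_min z_def)
  have inc: "z (Suc l) \<ge> z l + mu" if "1 \<le> l" for l
  proof -
    have "freq x (Suc l) (tb (Suc l)) (a (Suc l)) \<le> freq x l (tb l) (a l)"
      unfolding a_def by (rule freq_mono)
    moreover have "thr (Suc l) = thr l + mu" using that by (simp add: thr_def algebra_simps of_nat_diff)
    ultimately show ?thesis by (simp add: z_def)
  qed
  define c where "c l = (if l < sa then Lf lam mu (z l) else 0)" for l
  have "Qa lam x sa \<le> exp (sum c {1..k}) * Qa lam x' sa"
    unfolding Qa_def
  proof (rule prod_le_exp)
    fix l assume "l \<in> {1..k}"
    show "0 \<le> (if l < sa then 1 - lapCDF lam (yv x l (a l)) else if l = sa then lapCDF lam (yv x l (a l)) else 1) \<and>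
          (if l < sa then 1 - lapCDF lam (yv x l (a l)) else if l = sa then lapCDF lam (yv x l (a l)) else 1)
          \<le> exp (c l) * (if l < sa then 1 - lapCDF lam (yv x' l (a l)) else if l = sa then lapCDF lam (yv x' l (a l)) else 1)"
      using lapCDF_bounds[OF lam, of "yv x l (a l)"] pass_a[OF lam mu_gt, of "z l"] fail_a[OF lam mu_gt, of "z l"]
      by (auto simp: c_def yx yx')
  qed simp
  also have "exp (sum c {1..k}) \<le> exp ((2 + 1 / (1 - exp (- mu / lam))) / lam)"
  proof -
    have "sum c {1..k} \<le> (\<Sum>l\<in>{1..k}. Lf lam mu (z l))"
      by (rule sum_mono) (use Lf_nonneg[OF lam mu_gt] in \<open>auto simp: c_def\<close>)
    also have "\<dots> \<le> (2 + 1 / (1 - exp (- mu / lam))) / lam"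
      by (rule Lf_sum[OF lam mu_gt, where z=z]) (rule inc)
    finally show ?thesis by simp
  qed
  then have "exp (sum c {1..k}) * Qa lam x' sa \<le> exp ((2 + 1 / (1 - exp (- mu / lam))) / lam) * Qa lam x' sa"
    by (rule mult_right_mono) (rule Qa_nonneg[OF lam])
  finally show ?thesis .
qed

lemma Qb_bound:
  assumes lam: "lam > 0"
  shows "Qb lam x sb \<le> exp (1 / lam) * Qb lam x' sb"
proof -
  define w where "w l = thr l - real (freq x l (tb l) (b l))" for l
  have yx: "yv x l (b l) = min (w l) mu" for l by (simp add: yv_min w_def)
  have yx': "yv x' l (b l) = min (w l - 1) mu" for l using freq_b[of l] by (simp add: yv_min w_def)
  define c where "c l = (if l = sb then 1 / lam else 0)" for l
  have "Qb lam x sb \<le> exp (sum c {1..k}) * Qb lam x' sb"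
    unfolding Qb_def
  proof (rule prod_le_exp)
    fix l assume "l \<in> {1..k}"
    show "0 \<le> (if l < sb then 1 - lapCDF lam (yv x l (b l)) else if l = sb then lapCDF lam (yv x l (b l)) else 1) \<and>
          (if l < sb then 1 - lapCDF lam (yv x l (b l)) else if l = sb then lapCDF lam (yv x l (b l)) else 1)
          \<le> exp (c l) * (if l < sb then 1 - lapCDF lam (yv x' l (b l)) else if l = sb then lapCDF lam (yv x' l (b l)) else 1)"
      using lapCDF_bounds[OF lam, of "yv x l (b l)"] pass_b[OF lam mu_gt, of "w l"] fail_b[OF lam mu_gt, of "w l"]
      by (auto simp: c_def yx yx')
  qed simp
  also have "exp (sum c {1..k}) \<le> exp (1 / lam)"
  proof -
    have "sum c {1..k} = (if sb \<in> {1..k} then 1 / lam else 0)"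
      unfolding c_def by (simp add: sum.delta)
    then have "sum c {1..k} \<le> 1 / lam" using lam by simp
    then show ?thesis by simp
  qed
  then have "exp (sum c {1..k}) * Qb lam x' sb \<le> exp (1 / lam) * Qb lam x' sb"
    by (rule mult_right_mono) (rule Qb_nonneg[OF lam])
  finally show ?thesis .
qed

end

lemma sets_laplace[simp, measurable_cong]: "sets (laplace lam) = sets borel"
  by (simp add: laplace_def)

lemma space_laplace[simp]: "space (laplace lam) = UNIV"
  by (simp add: laplace_def)

lemma comp_meas[measurable]: "(\<lambda>Z. Z idx) \<in> borel_measurable (PiM I (\<lambda>_. laplace lam))"
proof (cases "idx \<in> I")
  case True
  have "(\<lambda>Z. Z idx) \<in> measurable (PiM I (\<lambda>_. laplace lam)) (laplace lam)"
    by (rule measurable_component_singleton[OF True])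
  moreover have "measurable (PiM I (\<lambda>_. laplace lam)) (laplace lam) = measurable (PiM I (\<lambda>_. laplace lam)) borel"
    by (rule measurable_cong_sets) simp_all
  ultimately show ?thesis by simp
next
  case False
  have "(\<lambda>Z. undefined) \<in> borel_measurable (PiM I (\<lambda>_. laplace lam))" by simp
  then show ?thesis
    apply (subst measurable_cong)
     prefer 2 apply assumption
    using False apply (auto simp: space_PiM PiE_def extensional_def)
    done
qed

lemma pred_Dx[measurable]:
  fixes I :: "(nat \<times> nat \<times> bool list) set"
  shows "Measurable.pred (PiM I (\<lambda>_. laplace lam)) (\<lambda>Z. Dx tau mu y Z l t s)"
proof -
  have "(\<lambda>Z. max (real (freq y l t s)) (tau + real (l - 1) * mu - mu) + Z (l, t, s)) \<in> borel_measurable (PiM I (\<lambda>_. laplace lam))"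
    by (intro borel_measurable_add borel_measurable_const comp_meas)
  then show ?thesis unfolding Dx_def Measurable.pred_def by (rule borel_measurable_less[OF borel_measurable_const])
qed

definition FL :: "nat \<Rightarrow> bool list set set" where "FL l = Pow {s. length s = 2^l}"

lemma finite_FL: "finite (FL l)"
proof -
  have "{s::bool list. length s = 2^l} \<subseteq> {s. set s \<subseteq> UNIV \<and> length s \<le> 2^l}" by auto
  then have "finite {s::bool list. length s = 2^l}"
    by (rule finite_subset) (intro finite_lists_length_le, simp)
  then show ?thesis by (simp add: FL_def)
qed

lemma finite_FL_elem: "A \<in> FL l \<Longrightarrow> finite A"
  using finite_FL by (metis FL_def PowD finite_Pow_iff rev_finite_subset)

lemma conc_FL: "A \<in> FL l \<Longrightarrow> B \<in> FL l \<Longrightarrow> conc A B \<in> FL (Suc l)"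
proof -
  assume A: "A \<in> FL l" and B: "B \<in> FL l"
  have "length s = 2^Suc l" if "s \<in> conc A B" for s
  proof -
    from that obtain s1 s2 where "s = s1 @ s2" "s1 \<in> A" "s2 \<in> B" by (auto simp: conc_def)
    moreover then have "length s1 = 2^l" "length s2 = 2^l" using A B by (auto simp: FL_def)
    ultimately show ?thesis by simp
  qed
  then show ?thesis by (auto simp: FL_def)
qed

lemma finite_conc: "finite A \<Longrightarrow> finite B \<Longrightarrow> finite (conc A B)"
proof -
  assume "finite A" "finite B"
  then have "finite ((\<lambda>(s1, s2). s1 @ s2) ` (A \<times> B))" by simp
  moreover have "conc A B = (\<lambda>(s1, s2). s1 @ s2) ` (A \<times> B)" by (auto simp: conc_def)
  ultimately show ?thesis by simp
qed

lemma set_filter_eq: "({s \<in> C. D s} = S) \<longleftrightarrow> (S \<subseteq> C \<and> (\<forall>s\<in>C. (s \<in> S) = D s))"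
  by blast

lemma phh_meas_FL:
  "(\<lambda>Z. phh_L tau mu y Z l t) \<in> measurable (PiM I (\<lambda>_. laplace lam)) (count_space (FL l))"
proof (induction l arbitrary: t)
  case 0
  have "{[False], [True]} \<in> FL 0" by (auto simp: FL_def)
  then show ?case by simp
next
  case (Suc l)
  let ?P = "PiM I (\<lambda>_. laplace lam)"
  have inner: "(\<lambda>Z. {s \<in> conc A B. Dx tau mu y Z (Suc l) t s}) \<in> measurable ?P (count_space (FL (Suc l)))"
    if A: "A \<in> FL l" and B: "B \<in> FL l" for A B
  proof (subst measurable_count_space_eq2[OF finite_FL], intro conjI ballI)
    show "(\<lambda>Z. {s \<in> conc A B. Dx tau mu y Z (Suc l) t s}) \<in> space ?P \<rightarrow> FL (Suc l)"
      using conc_FL[OF A B] by (auto simp: FL_def)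
    fix S assume "S \<in> FL (Suc l)"
    have fc: "finite (conc A B)" using finite_conc finite_FL_elem A B by blast
    have p1: "Measurable.pred ?P (\<lambda>Z. (s \<in> S) = Dx tau mu y Z (Suc l) t s)" for s
    proof (cases "s \<in> S")
      case True
      then show ?thesis by (simp add: pred_Dx)
    next
      case False
      have "Measurable.pred ?P (\<lambda>Z. Dx tau mu y Z (Suc l) t s)" by (rule pred_Dx)
      from pred_intros_logic(2)[OF this] False show ?thesis by simp
    qed
    have p2: "Measurable.pred ?P (\<lambda>Z. \<forall>s\<in>conc A B. (s \<in> S) = Dx tau mu y Z (Suc l) t s)"
      by (rule pred_intros_finite(3)[OF fc p1])
    have "Measurable.pred ?P (\<lambda>Z. S \<subseteq> conc A B \<and> (\<forall>s\<in>conc A B. (s \<in> S) = Dx tau mu y Z (Suc l) t s))"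
      using p2 by (cases "S \<subseteq> conc A B") (simp_all add: Measurable.pred_def)
    moreover have "(\<lambda>Z. {s \<in> conc A B. Dx tau mu y Z (Suc l) t s}) -` {S} \<inter> space ?P
        = {Z \<in> space ?P. S \<subseteq> conc A B \<and> (\<forall>s\<in>conc A B. (s \<in> S) = Dx tau mu y Z (Suc l) t s)}"
      by (auto simp only: set_filter_eq vimage_def Int_def mem_Collect_eq singleton_iff)
    ultimately show "(\<lambda>Z. {s \<in> conc A B. Dx tau mu y Z (Suc l) t s}) -` {S} \<inter> space ?P \<in> sets ?P"
      by (simp add: Measurable.pred_def)
  qed
  have "(\<lambda>Z. (\<lambda>A Z. {s \<in> conc A (phh_L tau mu y Z l (2 * t)). Dx tau mu y Z (Suc l) t s}) (phh_L tau mu y Z l (2 * t - 1)) Z)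
      \<in> measurable ?P (count_space (FL (Suc l)))"
  proof (rule measurable_compose_countable'[where f="\<lambda>A Z. {s \<in> conc A (phh_L tau mu y Z l (2 * t)). Dx tau mu y Z (Suc l) t s}" and g="\<lambda>Z. phh_L tau mu y Z l (2 * t - 1)", OF _ Suc.IH countable_finite[OF finite_FL]])
    fix A assume A: "A \<in> FL l"
    show "(\<lambda>Z. {s \<in> conc A (phh_L tau mu y Z l (2 * t)). Dx tau mu y Z (Suc l) t s}) \<in> measurable ?P (count_space (FL (Suc l)))"
      by (rule measurable_compose_countable'[where f="\<lambda>B Z. {s \<in> conc A B. Dx tau mu y Z (Suc l) t s}", OF inner[OF A] Suc.IH countable_finite[OF finite_FL]])
  qed
  moreover have "(\<lambda>Z. phh_L tau mu y Z (Suc l) t) = (\<lambda>Z. {s \<in> conc (phh_L tau mu y Z l (2 * t - 1)) (phh_L tau mu y Z l (2 * t)). Dx tau mu y Z (Suc l) t s})"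
    by (simp only: phh_Suc)
  ultimately show ?case by (simp only:)
qed

lemma phh_meas:
  "(\<lambda>Z. phh_L tau mu y Z l t) \<in> measurable (PiM I (\<lambda>_. laplace lam)) (count_space UNIV)"
proof -
  have "(\<lambda>S::bool list set. S) \<in> measurable (count_space (FL l)) (count_space UNIV)"
    by (rule measurable_count_space)
  from measurable_compose[OF phh_meas_FL this] show ?thesis .
qed

context flip2
begin

definition Wset :: "(nat \<times> nat \<times> bool list) set" where "Wset = noise_idx k - Cset"

lemma WC_disj: "Wset \<inter> Cset = {}" by (auto simp: Wset_def)
lemma WC_un: "Wset \<union> Cset = noise_idx k" using Cset_sub by (auto simp: Wset_def)
lemma fin_C: "finite Cset" by (simp add: Cset_def)
lemma fin_W: "finite Wset" using finite_noise_idx by (simp add: Wset_def)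

lemma merge_restrict2: "merge Wset Cset (w, restrict c Cset) = merge Wset Cset (w, c)"
  by (auto simp: merge_def restrict_def fun_eq_iff)

lemma ia_C: "1 \<le> l \<Longrightarrow> l \<le> k \<Longrightarrow> ia l \<in> Cset" by (auto simp: Cset_def)
lemma ib_C: "1 \<le> l \<Longrightarrow> l \<le> k \<Longrightarrow> ib l \<in> Cset" by (auto simp: Cset_def)

lemma eva_cong:
  assumes "1 \<le> sa" "sa \<le> k + 1" "\<And>l. 1 \<le> l \<Longrightarrow> l \<le> k \<Longrightarrow> c (ia l) = c' (ia l)"
  shows "eva y sa c = eva y sa c'"
proof -
  have "\<forall>l. 1 \<le> l \<and> l < sa \<longrightarrow> c (ia l) = c' (ia l)" using assms by auto
  moreover have "sa \<le> k \<longrightarrow> 1 \<le> sa \<longrightarrow> c (ia sa) = c' (ia sa)" using assms by auto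
  ultimately show ?thesis using assms(1) unfolding eva_def by auto
qed

lemma evb_cong:
  assumes "1 \<le> sb" "sb \<le> k + 1" "\<And>l. 1 \<le> l \<Longrightarrow> l \<le> k \<Longrightarrow> c (ib l) = c' (ib l)"
  shows "evb y sb c = evb y sb c'"
proof -
  have "\<forall>l. 1 \<le> l \<and> l < sb \<longrightarrow> c (ib l) = c' (ib l)" using assms by auto
  moreover have "sb \<le> k \<longrightarrow> 1 \<le> sb \<longrightarrow> c (ib sb) = c' (ib sb)" using assms by auto
  ultimately show ?thesis using assms(1) unfolding evb_def by auto
qed

lemma merge_C: "idx \<in> Cset \<Longrightarrow> merge Wset Cset (w, c) idx = c idx"
  using WC_disj by (auto simp: merge_def)

lemma Oy_cc:
  assumes "y = x \<or> y = x'"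
  shows "phh_L tau mu y (merge Wset Cset (w, cc sa sb)) k 1 = phh_L tau mu x (merge Wset Cset (w, cc sa sb)) k 1"
proof -
  have "phh_L tau mu x (merge Wset Cset (w, cc sa sb)) k 1 = phh_L tau mu x' (merge Wset Cset (w, cc sa sb)) k 1"
    by (rule K2) (simp add: merge_C cc_def split: prod.splits)
  then show ?thesis using assms by auto
qed

lemma O_decomp:
  assumes y: "y = x \<or> y = x'" and sa: "sa \<in> {1..k+1}" and sb: "sb \<in> {1..k+1}"
    and ea: "eva y sa c" and eb: "evb y sb c"
  shows "phh_L tau mu y (merge Wset Cset (w, c)) k 1 = phh_L tau mu x (merge Wset Cset (w, cc sa sb)) k 1"
proof -
  have ly: "length y = length x" using y len_x' by auto
  have ea': "eva y sa (merge Wset Cset (w, c))"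
    using ea eva_cong[of sa "merge Wset Cset (w, c)" c y] sa by (simp add: merge_C ia_C)
  have eb': "evb y sb (merge Wset Cset (w, c))"
    using eb evb_cong[of sb "merge Wset Cset (w, c)" c y] sb by (simp add: merge_C ib_C)
  have "phh_L tau mu y (merge Wset Cset (w, c)) k 1 = phh_L tau mu y (merge Wset Cset (w, cc sa sb)) k 1"
  proof (rule K1[OF ly _ _ _ _ ea' eb'])
    show "1 \<le> sa" "1 \<le> sb" using sa sb by auto
    fix idx
    show "idx \<notin> Cset \<Longrightarrow> merge Wset Cset (w, c) idx = merge Wset Cset (w, cc sa sb) idx"
      by (simp add: merge_def)
    show "idx \<in> Cset \<Longrightarrow> merge Wset Cset (w, cc sa sb) idx = cc sa sb idx"
      by (rule merge_C)
  qed
  also have "\<dots> = phh_L tau mu x (merge Wset Cset (w, cc sa sb)) k 1"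
    by (rule Oy_cc[OF y])
  finally show ?thesis .
qed


definition PW :: "real \<Rightarrow> ((nat \<times> nat \<times> bool list) \<Rightarrow> real) measure" where
  "PW lam = PiM Wset (\<lambda>_. laplace lam)"
definition PC :: "real \<Rightarrow> ((nat \<times> nat \<times> bool list) \<Rightarrow> real) measure" where
  "PC lam = PiM Cset (\<lambda>_. laplace lam)"
definition Aset :: "real \<Rightarrow> nat \<Rightarrow> nat \<Rightarrow> bool list set set \<Rightarrow> ((nat \<times> nat \<times> bool list) \<Rightarrow> real) set" where
  "Aset lam sa sb E = {w \<in> space (PW lam). phh_L tau mu x (merge Wset Cset (w, cc sa sb)) k 1 \<in> E}"
definition Bset :: "real \<Rightarrow> bool list list \<Rightarrow> nat \<Rightarrow> nat \<Rightarrow> ((nat \<times> nat \<times> bool list) \<Rightarrow> real) set" where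
  "Bset lam y sa sb = {c \<in> space (PC lam). eva y sa c \<and> evb y sb c}"

lemma L1:
  assumes lam: "lam > 0"
  shows "measure (PrivHeavyHitter lam tau mu k y) E =
    measure (PW lam \<Otimes>\<^sub>M PC lam) {p \<in> space (PW lam \<Otimes>\<^sub>M PC lam). phh_L tau mu y (merge Wset Cset p) k 1 \<in> E}"
proof -
  interpret product_sigma_finite "\<lambda>_. laplace lam"
    unfolding product_sigma_finite_def using prob_space_imp_sigma_finite[OF prob_space_laplace[OF lam]] by simp
  have dm: "distr (PW lam \<Otimes>\<^sub>M PC lam) (PiM (noise_idx k) (\<lambda>_. laplace lam)) (merge Wset Cset) = PiM (noise_idx k) (\<lambda>_. laplace lam)"
    using distr_merge[OF WC_disj fin_W fin_C] by (simp add: WC_un PW_def PC_def)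
  have mm: "merge Wset Cset \<in> measurable (PW lam \<Otimes>\<^sub>M PC lam) (PiM (noise_idx k) (\<lambda>_. laplace lam))"
    using measurable_merge[where I=Wset and J=Cset and M="\<lambda>_. laplace lam"] by (simp add: WC_un PW_def PC_def)
  have mo: "(\<lambda>Z. phh_L tau mu y Z k 1) \<in> measurable (PiM (noise_idx k) (\<lambda>_. laplace lam)) (count_space UNIV)"
    by (rule phh_meas)
  have "PrivHeavyHitter lam tau mu k y = distr (distr (PW lam \<Otimes>\<^sub>M PC lam) (PiM (noise_idx k) (\<lambda>_. laplace lam)) (merge Wset Cset)) (count_space UNIV) (\<lambda>Z. phh_L tau mu y Z k 1)"
    unfolding PrivHeavyHitter_def dm ..
  also have "\<dots> = distr (PW lam \<Otimes>\<^sub>M PC lam) (count_space UNIV) ((\<lambda>Z. phh_L tau mu y Z k 1) \<circ> merge Wset Cset)"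
    by (rule distr_distr[OF mo mm])
  finally have "measure (PrivHeavyHitter lam tau mu k y) E = measure (PW lam \<Otimes>\<^sub>M PC lam) (((\<lambda>Z. phh_L tau mu y Z k 1) \<circ> merge Wset Cset) -` E \<inter> space (PW lam \<Otimes>\<^sub>M PC lam))"
    using measure_distr[OF measurable_comp[OF mm mo], of E] by simp
  also have "((\<lambda>Z. phh_L tau mu y Z k 1) \<circ> merge Wset Cset) -` E \<inter> space (PW lam \<Otimes>\<^sub>M PC lam)
      = {p \<in> space (PW lam \<Otimes>\<^sub>M PC lam). phh_L tau mu y (merge Wset Cset p) k 1 \<in> E}"
    by auto
  finally show ?thesis .
qed

lemma L2:
  assumes y: "y = x \<or> y = x'"
  shows "{p \<in> space (PW lam \<Otimes>\<^sub>M PC lam). phh_L tau mu y (merge Wset Cset p) k 1 \<in> E}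
    = (\<Union>(sa, sb)\<in>{1..k+1} \<times> {1..k+1}. Aset lam sa sb E \<times> Bset lam y sa sb)"
proof (intro equalityI subsetI)
  fix p assume p: "p \<in> {p \<in> space (PW lam \<Otimes>\<^sub>M PC lam). phh_L tau mu y (merge Wset Cset p) k 1 \<in> E}"
  obtain w c where wc: "p = (w, c)" by (cases p)
  have w: "w \<in> space (PW lam)" and c: "c \<in> space (PC lam)" using p wc by (auto simp: space_pair_measure)
  obtain sa where sa: "sa \<in> {1..k+1}" "eva y sa c" using eva_exists by blast
  obtain sb where sb: "sb \<in> {1..k+1}" "evb y sb c" using evb_exists by blast
  have "phh_L tau mu x (merge Wset Cset (w, cc sa sb)) k 1 \<in> E"
    using p wc O_decomp[OF y sa(1) sb(1) sa(2) sb(2), of w] by simp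
  then have "w \<in> Aset lam sa sb E" "c \<in> Bset lam y sa sb" using w c sa sb by (auto simp: Aset_def Bset_def)
  then show "p \<in> (\<Union>(sa, sb)\<in>{1..k+1} \<times> {1..k+1}. Aset lam sa sb E \<times> Bset lam y sa sb)"
    using sa(1) sb(1) wc by blast
next
  fix p assume "p \<in> (\<Union>(sa, sb)\<in>{1..k+1} \<times> {1..k+1}. Aset lam sa sb E \<times> Bset lam y sa sb)"
  then obtain sa sb w c where sab: "sa \<in> {1..k+1}" "sb \<in> {1..k+1}" and wc: "p = (w, c)"
    and w: "w \<in> Aset lam sa sb E" and c: "c \<in> Bset lam y sa sb" by blast
  have "phh_L tau mu y (merge Wset Cset (w, c)) k 1 = phh_L tau mu x (merge Wset Cset (w, cc sa sb)) k 1"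
    using c by (intro O_decomp[OF y sab]) (auto simp: Bset_def)
  then show "p \<in> {p \<in> space (PW lam \<Otimes>\<^sub>M PC lam). phh_L tau mu y (merge Wset Cset p) k 1 \<in> E}"
    using w c wc by (auto simp: Aset_def Bset_def space_pair_measure)
qed


definition Xa :: "real \<Rightarrow> bool list list \<Rightarrow> nat \<Rightarrow> nat \<Rightarrow> real set" where
  "Xa lam y sa l = (if l < sa then {z. yv y l (a l) < z} else if l = sa then {z. z \<le> yv y l (a l)} else UNIV)"
definition Xb :: "real \<Rightarrow> bool list list \<Rightarrow> nat \<Rightarrow> nat \<Rightarrow> real set" where
  "Xb lam y sb l = (if l < sb then {z. yv y l (b l) < z} else if l = sb then {z. z \<le> yv y l (b l)} else UNIV)"
definition Xs :: "real \<Rightarrow> bool list list \<Rightarrow> nat \<Rightarrow> nat \<Rightarrow> nat \<times> nat \<times> bool list \<Rightarrow> real set" where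
  "Xs lam y sa sb idx = (case idx of (l, t, s) \<Rightarrow> if s = a l then Xa lam y sa l else Xb lam y sb l)"

lemma Xs_ia: "Xs lam y sa sb (ia l) = Xa lam y sa l" by (simp add: Xs_def ia_def)
lemma Xs_ib: "Xs lam y sa sb (ib l) = Xb lam y sb l" using a_ne_b[of l] by (simp add: Xs_def ib_def)

lemma space_PC: "space (PC lam) = PiE Cset (\<lambda>_. UNIV)"
  by (simp add: PC_def space_PiM)
lemma space_PW: "space (PW lam) = PiE Wset (\<lambda>_. UNIV)"
  by (simp add: PW_def space_PiM)

lemma eva_X: "sa \<in> {1..k+1} \<Longrightarrow> eva y sa c \<longleftrightarrow> (\<forall>l\<in>{1..k}. c (ia l) \<in> Xa lam y sa l)"
  by (auto simp: eva_def Xa_def not_less)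

lemma evb_X: "sb \<in> {1..k+1} \<Longrightarrow> evb y sb c \<longleftrightarrow> (\<forall>l\<in>{1..k}. c (ib l) \<in> Xb lam y sb l)"
  by (auto simp: evb_def Xb_def not_less)

lemma Bset_PiE:
  assumes "sa \<in> {1..k+1}" "sb \<in> {1..k+1}"
  shows "Bset lam y sa sb = PiE Cset (Xs lam y sa sb)"
proof -
  have "(\<forall>idx\<in>Cset. c idx \<in> Xs lam y sa sb idx) \<longleftrightarrow>
        (\<forall>l\<in>{1..k}. c (ia l) \<in> Xa lam y sa l) \<and> (\<forall>l\<in>{1..k}. c (ib l) \<in> Xb lam y sb l)" for c
    unfolding Cset_def ball_Un Ball_image_comp by (simp add: o_def Xs_ia Xs_ib)
  note H = this
  show ?thesis
  proof (intro set_eqI)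
    fix c
    show "c \<in> Bset lam y sa sb \<longleftrightarrow> c \<in> PiE Cset (Xs lam y sa sb)"
      using H[of c] eva_X[OF assms(1), where lam=lam and y=y and c=c] evb_X[OF assms(2), where lam=lam and y=y and c=c]
      by (auto simp: Bset_def space_PC PiE_iff)
  qed
qed

lemma sets_Xa: "Xa lam y sa l \<in> sets borel" by (simp add: Xa_def)
lemma sets_Xb: "Xb lam y sb l \<in> sets borel" by (simp add: Xb_def)
lemma sets_Xs: "Xs lam y sa sb idx \<in> sets borel" by (simp add: Xs_def sets_Xa sets_Xb split: prod.splits)

lemma em_Xa:
  assumes lam: "lam > 0"
  shows "emeasure (laplace lam) (Xa lam y sa l) = ennreal (if l < sa then 1 - lapCDF lam (yv y l (a l))
      else if l = sa then lapCDF lam (yv y l (a l)) else 1)"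
proof -
  interpret prob_space "laplace lam" by (rule prob_space_laplace[OF lam])
  have u: "prob UNIV = 1" using prob_space by simp
  show ?thesis
    by (simp add: Xa_def emeasure_eq_measure measure_laplace_gt[OF lam] measure_laplace_le[OF lam] u)
qed

lemma em_Xb:
  assumes lam: "lam > 0"
  shows "emeasure (laplace lam) (Xb lam y sb l) = ennreal (if l < sb then 1 - lapCDF lam (yv y l (b l))
      else if l = sb then lapCDF lam (yv y l (b l)) else 1)"
proof -
  interpret prob_space "laplace lam" by (rule prob_space_laplace[OF lam])
  have u: "prob UNIV = 1" using prob_space by simp
  show ?thesis
    by (simp add: Xb_def emeasure_eq_measure measure_laplace_gt[OF lam] measure_laplace_le[OF lam] u)
qed

lemma L4:
  assumes lam: "lam > 0" and sab: "sa \<in> {1..k+1}" "sb \<in> {1..k+1}"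
  shows "measure (PC lam) (Bset lam y sa sb) = Qa lam y sa * Qb lam y sb"
proof -
  interpret product_sigma_finite "\<lambda>_. laplace lam"
    unfolding product_sigma_finite_def using prob_space_imp_sigma_finite[OF prob_space_laplace[OF lam]] by simp
  have "emeasure (PC lam) (Bset lam y sa sb) = (\<Prod>idx\<in>Cset. emeasure (laplace lam) (Xs lam y sa sb idx))"
    unfolding Bset_PiE[OF sab] PC_def by (rule emeasure_PiM[OF fin_C]) (simp add: sets_Xs)
  also have "\<dots> = (\<Prod>idx\<in>ia ` {1..k}. emeasure (laplace lam) (Xs lam y sa sb idx)) *
                  (\<Prod>idx\<in>ib ` {1..k}. emeasure (laplace lam) (Xs lam y sa sb idx))"
    unfolding Cset_def by (rule prod.union_disjoint) (auto simp: ia_ne_ib ia_ne_ib[symmetric])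
  also have "\<dots> = (\<Prod>l\<in>{1..k}. emeasure (laplace lam) (Xa lam y sa l)) * (\<Prod>l\<in>{1..k}. emeasure (laplace lam) (Xb lam y sb l))"
    by (subst prod.reindex, simp add: inj_on_def ia_inj, subst prod.reindex, simp add: inj_on_def ib_inj)
       (simp add: Xs_ia Xs_ib)
  also have "\<dots> = ennreal (Qa lam y sa) * ennreal (Qb lam y sb)"
    unfolding Qa_def Qb_def em_Xa[OF lam] em_Xb[OF lam]
    by (subst prod_ennreal, use lapCDF_bounds[OF lam] in auto)+
  also have "\<dots> = ennreal (Qa lam y sa * Qb lam y sb)"
    by (simp add: ennreal_mult Qa_nonneg[OF lam] Qb_nonneg[OF lam])
  finally show ?thesis
    by (simp add: measure_def Qa_nonneg[OF lam] Qb_nonneg[OF lam])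
qed


lemma prob_PW: "lam > 0 \<Longrightarrow> prob_space (PW lam)"
  unfolding PW_def by (intro prob_space_PiM prob_space_laplace)
lemma prob_PC: "lam > 0 \<Longrightarrow> prob_space (PC lam)"
  unfolding PC_def by (intro prob_space_PiM prob_space_laplace)

lemma sets_Aset:
  assumes lam: "lam > 0"
  shows "Aset lam sa sb E \<in> sets (PW lam)"
proof -
  have c: "restrict (cc sa sb) Cset \<in> space (PC lam)" by (simp add: space_PC)
  have m1: "(\<lambda>w. (w, restrict (cc sa sb) Cset)) \<in> measurable (PW lam) (PW lam \<Otimes>\<^sub>M PC lam)"
    by (rule measurable_Pair[OF measurable_ident_sets[OF refl] measurable_const[OF c]])
  have mm: "merge Wset Cset \<in> measurable (PW lam \<Otimes>\<^sub>M PC lam) (PiM (noise_idx k) (\<lambda>_. laplace lam))"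
    using measurable_merge[where I=Wset and J=Cset and M="\<lambda>_. laplace lam"] by (simp add: WC_un PW_def PC_def)
  have mo: "(\<lambda>Z. phh_L tau mu x Z k 1) \<in> measurable (PiM (noise_idx k) (\<lambda>_. laplace lam)) (count_space UNIV)"
    by (rule phh_meas)
  have "(\<lambda>w. phh_L tau mu x (merge Wset Cset (w, restrict (cc sa sb) Cset)) k 1) \<in> measurable (PW lam) (count_space UNIV)"
    using measurable_comp[OF measurable_comp[OF m1 mm] mo] by (simp add: o_def)
  then have "(\<lambda>w. phh_L tau mu x (merge Wset Cset (w, restrict (cc sa sb) Cset)) k 1) -` E \<inter> space (PW lam) \<in> sets (PW lam)"
    by (rule measurable_sets) simp
  moreover have "(\<lambda>w. phh_L tau mu x (merge Wset Cset (w, restrict (cc sa sb) Cset)) k 1) -` E \<inter> space (PW lam) = Aset lam sa sb E"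
    by (auto simp: Aset_def merge_restrict2)
  ultimately show ?thesis by simp
qed

lemma sets_Bset:
  assumes "sa \<in> {1..k+1}" "sb \<in> {1..k+1}"
  shows "Bset lam y sa sb \<in> sets (PC lam)"
  unfolding Bset_PiE[OF assms] PC_def by (rule sets_PiM_I_finite[OF fin_C]) (simp add: sets_Xs)

lemma L3:
  assumes lam: "lam > 0"
  shows "measure (PW lam \<Otimes>\<^sub>M PC lam) (\<Union>(sa, sb)\<in>{1..k+1} \<times> {1..k+1}. Aset lam sa sb E \<times> Bset lam y sa sb)
    = (\<Sum>(sa, sb)\<in>{1..k+1} \<times> {1..k+1}. measure (PW lam) (Aset lam sa sb E) * measure (PC lam) (Bset lam y sa sb))"
proof -
  interpret pP: prob_space "PW lam \<Otimes>\<^sub>M PC lam" by (intro prob_space_pair prob_PW prob_PC lam)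
  interpret pC: sigma_finite_measure "PC lam" by (rule prob_space_imp_sigma_finite[OF prob_PC[OF lam]])
  let ?T = "{1..k+1} \<times> {1..k+1}"
  let ?F = "\<lambda>p. Aset lam (fst p) (snd p) E \<times> Bset lam y (fst p) (snd p)"
  have u: "(\<Union>(sa, sb)\<in>?T. Aset lam sa sb E \<times> Bset lam y sa sb) = (\<Union>p\<in>?T. ?F p)"
    by (auto simp: split_beta)
  have sF: "?F ` ?T \<subseteq> sets (PW lam \<Otimes>\<^sub>M PC lam)"
    using sets_Aset[OF lam] sets_Bset by (auto intro!: pair_measureI)
  have dF: "disjoint_family_on ?F ?T"
  proof (unfold disjoint_family_on_def, intro ballI impI)
    fix p q assume p: "p \<in> ?T" and q: "q \<in> ?T" and pq: "p \<noteq> q"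
    have "Bset lam y (fst p) (snd p) \<inter> Bset lam y (fst q) (snd q) = {}"
    proof (rule ccontr)
      assume "Bset lam y (fst p) (snd p) \<inter> Bset lam y (fst q) (snd q) \<noteq> {}"
      then obtain c where c: "eva y (fst p) c" "evb y (snd p) c" "eva y (fst q) c" "evb y (snd q) c"
        by (auto simp: Bset_def)
      have "fst p = fst q" using eva_unique[OF c(1) c(3)] p q by auto
      moreover have "snd p = snd q" using evb_unique[OF c(2) c(4)] p q by auto
      ultimately show False using pq by (simp add: prod_eq_iff)
    qed
    then show "?F p \<inter> ?F q = {}" by auto
  qed
  have "measure (PW lam \<Otimes>\<^sub>M PC lam) (\<Union>p\<in>?T. ?F p) = (\<Sum>p\<in>?T. measure (PW lam \<Otimes>\<^sub>M PC lam) (?F p))"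
    by (rule measure_finite_Union[OF _ sF dF]) (auto simp: pP.emeasure_finite)
  also have "\<dots> = (\<Sum>p\<in>?T. measure (PW lam) (Aset lam (fst p) (snd p) E) * measure (PC lam) (Bset lam y (fst p) (snd p)))"
  proof (rule sum.cong[OF refl])
    fix p assume p: "p \<in> ?T"
    have "emeasure (PW lam \<Otimes>\<^sub>M PC lam) (?F p) = emeasure (PW lam) (Aset lam (fst p) (snd p) E) * emeasure (PC lam) (Bset lam y (fst p) (snd p))"
      using p by (intro pC.emeasure_pair_measure_Times sets_Aset[OF lam] sets_Bset) auto
    then show "measure (PW lam \<Otimes>\<^sub>M PC lam) (?F p) = measure (PW lam) (Aset lam (fst p) (snd p) E) * measure (PC lam) (Bset lam y (fst p) (snd p))"
      by (simp add: measure_def enn2real_mult)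
  qed
  finally show ?thesis unfolding u by (simp add: split_beta)
qed

lemma single_bit:
  assumes lam: "lam > 0"
  shows "measure (PrivHeavyHitter lam tau mu k x) E \<le>
    exp ((2 + 1 / (1 - exp (- mu / lam))) / lam + 1 / lam) * measure (PrivHeavyHitter lam tau mu k x') E"
proof -
  let ?T = "{1..k+1} \<times> {1..k+1}"
  let ?C = "exp ((2 + 1 / (1 - exp (- mu / lam))) / lam + 1 / lam)"
  have P: "measure (PrivHeavyHitter lam tau mu k y) E = (\<Sum>(sa, sb)\<in>?T. measure (PW lam) (Aset lam sa sb E) * (Qa lam y sa * Qb lam y sb))"
    if y: "y = x \<or> y = x'" for y
  proof -
    have "measure (PrivHeavyHitter lam tau mu k y) E = (\<Sum>(sa, sb)\<in>?T. measure (PW lam) (Aset lam sa sb E) * measure (PC lam) (Bset lam y sa sb))"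
      unfolding L1[OF lam] L2[OF y] L3[OF lam] ..
    also have "\<dots> = (\<Sum>(sa, sb)\<in>?T. measure (PW lam) (Aset lam sa sb E) * (Qa lam y sa * Qb lam y sb))"
      by (rule sum.cong[OF refl]) (auto simp: L4[OF lam])
    finally show ?thesis .
  qed
  have "(\<Sum>(sa, sb)\<in>?T. measure (PW lam) (Aset lam sa sb E) * (Qa lam x sa * Qb lam x sb))
      \<le> (\<Sum>(sa, sb)\<in>?T. measure (PW lam) (Aset lam sa sb E) * (?C * (Qa lam x' sa * Qb lam x' sb)))"
  proof (rule sum_mono)
    fix p assume "p \<in> ?T"
    obtain sa sb where p: "p = (sa, sb)" by (cases p)
    have "Qa lam x sa * Qb lam x sb \<le> (exp ((2 + 1 / (1 - exp (- mu / lam))) / lam) * Qa lam x' sa) * (exp (1 / lam) * Qb lam x' sb)"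
      by (intro mult_mono Qa_bound[OF lam] Qb_bound[OF lam] Qb_nonneg[OF lam] mult_nonneg_nonneg Qa_nonneg[OF lam]) simp
    also have "\<dots> = ?C * (Qa lam x' sa * Qb lam x' sb)" by (simp add: exp_add)
    finally have "Qa lam x sa * Qb lam x sb \<le> ?C * (Qa lam x' sa * Qb lam x' sb)" .
    then show "(case p of (sa, sb) \<Rightarrow> measure (PW lam) (Aset lam sa sb E) * (Qa lam x sa * Qb lam x sb))
        \<le> (case p of (sa, sb) \<Rightarrow> measure (PW lam) (Aset lam sa sb E) * (?C * (Qa lam x' sa * Qb lam x' sb)))"
      unfolding p by (simp add: mult_left_mono)
  qed
  also have "\<dots> = ?C * (\<Sum>(sa, sb)\<in>?T. measure (PW lam) (Aset lam sa sb E) * (Qa lam x' sa * Qb lam x' sb))"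
    by (simp add: sum_distrib_left split_beta algebra_simps)
  finally show ?thesis using P[of x] P[of x'] by simp
qed

end

lemma one_bit:
  assumes lu: "length u = 2^k" and lu': "length u' = 2^k" and j: "j < 2^k"
    and d: "u ! j \<noteq> u' ! j" and s: "\<And>m. m \<noteq> j \<Longrightarrow> u ! m = u' ! m"
    and i: "i < length x" and xi: "x ! i = u"
    and lam: "lam > 0" and tau: "tau > 0" and mu: "mu > 1"
    and eps: "2 / lam * (1 + 1 / (1 - exp (- mu / lam))) \<le> eps"
  shows "measure (PrivHeavyHitter lam tau mu k x) E \<le> exp eps * measure (PrivHeavyHitter lam tau mu k (x[i := u'])) E"
proof -
  interpret flip2 k j u u' x i tau mu
    by unfold_locales (use assms in auto)
  have "measure (PrivHeavyHitter lam tau mu k x) E \<le>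
    exp ((2 + 1 / (1 - exp (- mu / lam))) / lam + 1 / lam) * measure (PrivHeavyHitter lam tau mu k x') E"
    by (rule single_bit[OF lam])
  also have "\<dots> \<le> exp eps * measure (PrivHeavyHitter lam tau mu k x') E"
  proof (rule mult_right_mono)
    have r: "1 \<le> 1 / (1 - exp (- mu / lam))" by (rule r_ge1[OF lam mu])
    have "(2 + 1 / (1 - exp (- mu / lam))) / lam + 1 / lam \<le> 2 / lam * (1 + 1 / (1 - exp (- mu / lam)))"
    proof -
      have "(2 + 1 / (1 - exp (- mu / lam))) / lam + 1 / lam = (3 + 1 / (1 - exp (- mu / lam))) / lam"
        by (simp add: add_divide_distrib)
      also have "\<dots> \<le> (2 + 2 * (1 / (1 - exp (- mu / lam)))) / lam"
        using r lam by (intro divide_right_mono) auto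
      also have "\<dots> = 2 / lam * (1 + 1 / (1 - exp (- mu / lam)))"
      proof -
        have g: "(2 + 2 * r) / lam = 2 / lam * (1 + r)" for r :: real using lam by (simp add: field_simps)
        show ?thesis by (rule g)
      qed
      finally show ?thesis .
    qed
    then show "exp ((2 + 1 / (1 - exp (- mu / lam))) / lam + 1 / lam) \<le> exp eps" using eps by simp
  qed simp
  finally show ?thesis by (simp add: x'_def)
qed

lemma hamming_zero:
  assumes "length u = length u'" "hamming u u' = 0"
  shows "u = u'"
proof (rule nth_equalityI)
  show "length u = length u'" by fact
  fix m assume m: "m < length u"
  have "finite {j. j < length u \<and> u ! j \<noteq> u' ! j}" by simp
  then have "{j. j < length u \<and> u ! j \<noteq> u' ! j} = {}" using assms(2) by (simp add: hamming_def)
  then show "u ! m = u' ! m" using m by auto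
qed

lemma hamming_step:
  assumes "length u = length u'" "j < length u" "u ! j \<noteq> u' ! j"
  shows "hamming (u[j := u' ! j]) u' = hamming u u' - 1"
proof -
  have "{m. m < length (u[j := u' ! j]) \<and> u[j := u' ! j] ! m \<noteq> u' ! m} = {m. m < length u \<and> u ! m \<noteq> u' ! m} - {j}"
    using assms by (auto simp: nth_list_update)
  moreover have "j \<in> {m. m < length u \<and> u ! m \<noteq> u' ! m}" using assms by simp
  ultimately show ?thesis unfolding hamming_def by simp
qed

lemma multi_bit:
  assumes lam: "lam > 0" and tau: "tau > 0" and mu: "mu > 1"
    and eps: "2 / lam * (1 + 1 / (1 - exp (- mu / lam))) \<le> eps"
  shows "i < length x \<Longrightarrow> length (x ! i) = 2^k \<Longrightarrow> length u' = 2^k \<Longrightarrow> hamming (x ! i) u' = h \<Longrightarrow>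
    measure (PrivHeavyHitter lam tau mu k x) E \<le> exp (eps * real h) * measure (PrivHeavyHitter lam tau mu k (x[i := u'])) E"
proof (induction h arbitrary: x)
  case 0
  then have "x ! i = u'" using hamming_zero by simp
  then have "x[i := u'] = x" by auto
  then show ?case by simp
next
  case (Suc h)
  let ?u = "x ! i"
  have "{m. m < length ?u \<and> ?u ! m \<noteq> u' ! m} \<noteq> {}"
    using Suc.prems(4) unfolding hamming_def by (metis card.empty nat.simps(3))
  then obtain j where j: "j < length ?u" "?u ! j \<noteq> u' ! j" by auto
  define u1 where "u1 = ?u[j := u' ! j]"
  define x1 where "x1 = x[i := u1]"
  have lu1: "length u1 = 2^k" using Suc.prems by (simp add: u1_def)
  have hu1: "hamming u1 u' = h"
    using hamming_step[of ?u u' j] Suc.prems j by (simp add: u1_def)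
  have s1: "measure (PrivHeavyHitter lam tau mu k x) E \<le> exp eps * measure (PrivHeavyHitter lam tau mu k x1) E"
    unfolding x1_def
  proof (rule one_bit[OF _ lu1 _ _ _ Suc.prems(1) refl lam tau mu eps])
    show "length (x ! i) = 2^k" by (rule Suc.prems(2))
    show "j < 2^k" using j Suc.prems by simp
    show "x ! i ! j \<noteq> u1 ! j" using j by (simp add: u1_def)
    show "\<And>m. m \<noteq> j \<Longrightarrow> x ! i ! m = u1 ! m" by (simp add: u1_def)
  qed
  have s2: "measure (PrivHeavyHitter lam tau mu k x1) E \<le> exp (eps * real h) * measure (PrivHeavyHitter lam tau mu k (x1[i := u'])) E"
    by (rule Suc.IH) (use Suc.prems lu1 hu1 in \<open>auto simp: x1_def\<close>)
  have x1u: "x1[i := u'] = x[i := u']" by (simp add: x1_def)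
  have "measure (PrivHeavyHitter lam tau mu k x) E \<le> exp eps * (exp (eps * real h) * measure (PrivHeavyHitter lam tau mu k (x[i := u'])) E)"
    using s1 s2 x1u by (smt (verit) exp_gt_zero mult_left_mono)
  also have "\<dots> = exp (eps * real (Suc h)) * measure (PrivHeavyHitter lam tau mu k (x[i := u'])) E"
    by (simp add: exp_add[symmetric] algebra_simps)
  finally show ?case .
qed

theorem lemmaA1:
  fixes k :: nat and lam mu eps tau :: real
  assumes "lam > 0" and "mu > 0" and "mu > 1"
    and "2 / lam * (1 + 1 / (1 - exp (- mu / lam))) \<le> eps"
    and "tau > 0"
  shows "nabla0_DP eps (2 ^ k) (PrivHeavyHitter lam tau mu k)"
  unfolding nabla0_DP_def
proof (intro allI impI)
  fix x x' :: "bool list list" and i :: nat and E :: "bool list set set"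
  assume h: "length x' = length x \<and> (\<forall>v\<in>set x. length v = 2 ^ k) \<and> (\<forall>v\<in>set x'. length v = 2 ^ k)
        \<and> i < length x \<and> (\<forall>j<length x. j \<noteq> i \<longrightarrow> x ! j = x' ! j)"
  have i: "i < length x" using h by simp
  have lx: "length (x ! i) = 2^k" using h i by (auto simp: nth_mem)
  have lx': "length (x' ! i) = 2^k" using h i by (metis nth_mem)
  have xx: "x' = x[i := x' ! i]"
    by (rule nth_equalityI) (use h in \<open>auto simp: nth_list_update\<close>)
  show "measure (PrivHeavyHitter lam tau mu k x) E \<le> exp (eps * real (hamming (x ! i) (x' ! i))) * measure (PrivHeavyHitter lam tau mu k x') E"
    using multi_bit[OF assms(1) assms(5) assms(3) assms(4) i lx lx' refl, of E] xx by simp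
qed

end
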